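(* Let $L\subset S^3$ be an oriented link, $\widehat{\mathcal{B}}_L$ its topological biquandle, and $A$ a generating set of $\widehat{\mathcal{B}}_L$. Then every element of $\widehat{\mathcal{B}}_L$ can be expressed in the form $(a\uparrow w_1)\downarrow w_2$, where $a\in A$ and $w_1,w_2$ are words in the free group $F(A)$ on $A$.
   Context: An oriented link $L$ is an oriented subspace of $S^3$ homeomorphic to a finite disjoint union of circles. Let $N_L$ be a regular neighborhood of $L$ and $E_L$ the closure of $S^3\setminus N_L$; the orientation of $L$ induces an orientation of its normal bundle by the right-hand rule. Choose a 3-ball $B^3\subset S^3$ with $N_L\subset B^3$ and antipodal points $z_0,z_1\in\partial B^3$. For a path $a$, $\overline{a}(t)=a(1-t)$; $a\cdot b$ is concatenation. Let $\mathcal{B}_L$ be the set of pairs $(a_0,a_1)$ with $a_i\colon[0,1]\to E_L$ a path from a point of $\partial N_L$ to $z_i$ and $a_0(0)=a_1(0)$. Set $(a_0,a_1)\sim(b_0,b_1)$ if there is a homotopy $H_t\colon[0,1]\to E_L$ with $H_0=\overline{a_0}\cdot a_1$, $H_1=\overline{b_0}\cdot b_1$, $H_t(0)=z_0$, $H_t(1)=z_1$, $H_t(\tfrac12)\in\partial N_L$ for all $t$. The topological biquandle is $\widehat{\mathcal{B}}_L=\mathcal{B}_L/\!\sim$ (classes $[a_0,a_1]$) with operations $[a_0,a_1]\uparrow[b_0,b_1]=[a_0\cdot\overline{b_0}\cdot m_{b_0(0)}\cdot b_0,\ a_1]$ and $[a_0,a_1]\downarrow[b_0,b_1]=[a_0,\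 a_1\cdot\overline{b_1}\cdot m_{b_1(0)}\cdot b_1]$, where for $p\in\partial N_L$, $m_p$ is the loop in $\partial N_L$ at $p$ going once positively around the meridian of the corresponding component of $L$; it is a biquandle. In a biquandle with $S(x,y)=(y\downarrow x,\ x\uparrow y)$, the bar operations are defined by $S^{-1}(a,b)=(b\Uparrow a,\ a\Downarrow b)$. A generating set is a subset $A$ such that the smallest subset containing $A$ and closed under $\uparrow,\downarrow,\Uparrow,\Downarrow$ is the whole biquandle. For a word $w=x_1^{\epsilon_1}\cdots x_k^{\epsilon_k}$ ($x_i\in A$, $\epsilon_i=\pm1$) and an element $y$, $y\uparrow w$ denotes $(\cdots((y\uparrow_{\epsilon_1}x_1)\uparrow_{\epsilon_2}x_2)\cdots)\uparrow_{\epsilon_k}x_k$ where $\uparrow_{+1}=\uparrow$ and $\uparrow_{-1}=\Uparrow$; similarly $y\downarrow w$ with $\downarrow_{+1}=\downarrow$, $\downarrow_{-1}=\Downarrow$. *)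

theory Defs
  imports "HOL-Analysis.Analysis"
begin

definition S3 :: "(real^4) set" where
  "S3 = sphere 0 1"

text \<open>A link with n components together with a closed regular (tubular) neighbourhood is
  given by an embedding  phi : {0..<n} x S^1 x D^2 -> S^3.  Component i of the link is
  z |-> phi i z 0 (oriented by the counterclockwise orientation of the unit circle z),
  and the disk coordinate w gives the normal disks.\<close>

definition tubular :: "nat \<Rightarrow> (nat \<Rightarrow> complex \<Rightarrow> complex \<Rightarrow> real^4) \<Rightarrow> bool" where
  "tubular n phi \<longleftrightarrow>
     (\<forall>i<n. continuous_on (sphere 0 1 \<times> cball 0 1) (\<lambda>(z,w). phi i z w)) \<and>
     (\<forall>i<n. (\<lambda>(z,w). phi i z w) ` (sphere 0 1 \<times> cball 0 1) \<subseteq> S3) \<and>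
     (\<forall>i<n. \<forall>j<n. \<forall>z\<in>sphere 0 1. \<forall>w\<in>cball 0 1. \<forall>z'\<in>sphere 0 1. \<forall>w'\<in>cball 0 1.
        phi i z w = phi j z' w' \<longrightarrow> i = j \<and> z = z' \<and> w = w')"

definition link_of :: "nat \<Rightarrow> (nat \<Rightarrow> complex \<Rightarrow> complex \<Rightarrow> real^4) \<Rightarrow> (real^4) set" where
  "link_of n phi = {phi i z 0 | i z. i < n \<and> z \<in> sphere 0 1}"

definition nbhd :: "nat \<Rightarrow> (nat \<Rightarrow> complex \<Rightarrow> complex \<Rightarrow> real^4) \<Rightarrow> (real^4) set" where
  "nbhd n phi = {phi i z w | i z w. i < n \<and> z \<in> sphere 0 1 \<and> w \<in> cball 0 1}"

definition bdry :: "nat \<Rightarrow> (nat \<Rightarrow> complex \<Rightarrow> complex \<Rightarrow> real^4) \<Rightarrow> (real^4) set" where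
  "bdry n phi = {phi i z w | i z w. i < n \<and> z \<in> sphere 0 1 \<and> w \<in> sphere 0 1}"

definition ext :: "nat \<Rightarrow> (nat \<Rightarrow> complex \<Rightarrow> complex \<Rightarrow> real^4) \<Rightarrow> (real^4) set" where
  "ext n phi = closure (S3 - nbhd n phi)"

definition meridian :: "nat \<Rightarrow> (nat \<Rightarrow> complex \<Rightarrow> complex \<Rightarrow> real^4) \<Rightarrow> real^4 \<Rightarrow> real \<Rightarrow> real^4" where
  "meridian n phi p =
     (case (SOME (i,z,w). i < n \<and> z \<in> sphere 0 1 \<and> w \<in> sphere 0 1 \<and> phi i z w = p) of
        (i,z,w) \<Rightarrow> (\<lambda>t. phi i z (w * cis (2 * pi * t))))"

type_synonym bpair = "(real \<Rightarrow> real^4) \<times> (real \<Rightarrow> real^4)"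

definition bpairs :: "nat \<Rightarrow> (nat \<Rightarrow> complex \<Rightarrow> complex \<Rightarrow> real^4) \<Rightarrow> real^4 \<Rightarrow> real^4 \<Rightarrow> bpair set" where
  "bpairs n phi z0 z1 = {(a0, a1). path a0 \<and> path a1 \<and>
      path_image a0 \<subseteq> ext n phi \<and> path_image a1 \<subseteq> ext n phi \<and>
      pathstart a0 \<in> bdry n phi \<and> pathstart a1 = pathstart a0 \<and>
      pathfinish a0 = z0 \<and> pathfinish a1 = z1}"

definition bequiv :: "nat \<Rightarrow> (nat \<Rightarrow> complex \<Rightarrow> complex \<Rightarrow> real^4) \<Rightarrow> real^4 \<Rightarrow> real^4 \<Rightarrow> bpair \<Rightarrow> bpair \<Rightarrow> bool" where
  "bequiv n phi z0 z1 a b \<longleftrightarrow>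
     (\<exists>H :: real \<times> real \<Rightarrow> real^4.
        continuous_on ({0..1} \<times> {0..1}) H \<and>
        H ` ({0..1} \<times> {0..1}) \<subseteq> ext n phi \<and>
        (\<forall>s\<in>{0..1}. H (0, s) = (reversepath (fst a) +++ snd a) s \<and>
                     H (1, s) = (reversepath (fst b) +++ snd b) s) \<and>
        (\<forall>t\<in>{0..1}. H (t, 0) = z0 \<and> H (t, 1) = z1 \<and> H (t, 1/2) \<in> bdry n phi))"

definition brel :: "nat \<Rightarrow> (nat \<Rightarrow> complex \<Rightarrow> complex \<Rightarrow> real^4) \<Rightarrow> real^4 \<Rightarrow> real^4 \<Rightarrow> bpair rel" where
  "brel n phi z0 z1 = {(a, b). a \<in> bpairs n phi z0 z1 \<and> b \<in> bpairs n phi z0 z1 \<and> bequiv n phi z0 z1 a b}"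

definition topbiq :: "nat \<Rightarrow> (nat \<Rightarrow> complex \<Rightarrow> complex \<Rightarrow> real^4) \<Rightarrow> real^4 \<Rightarrow> real^4 \<Rightarrow> bpair set set" where
  "topbiq n phi z0 z1 = bpairs n phi z0 z1 // brel n phi z0 z1"

definition up_rep :: "nat \<Rightarrow> (nat \<Rightarrow> complex \<Rightarrow> complex \<Rightarrow> real^4) \<Rightarrow> bpair \<Rightarrow> bpair \<Rightarrow> bpair" where
  "up_rep n phi a b = (fst a +++ (reversepath (fst b) +++ (meridian n phi (pathstart (fst b)) +++ fst b)), snd a)"

definition down_rep :: "nat \<Rightarrow> (nat \<Rightarrow> complex \<Rightarrow> complex \<Rightarrow> real^4) \<Rightarrow> bpair \<Rightarrow> bpair \<Rightarrow> bpair" where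
  "down_rep n phi a b = (fst a, snd a +++ (reversepath (snd b) +++ (meridian n phi (pathstart (snd b)) +++ snd b)))"

definition bq_up :: "nat \<Rightarrow> (nat \<Rightarrow> complex \<Rightarrow> complex \<Rightarrow> real^4) \<Rightarrow> real^4 \<Rightarrow> real^4 \<Rightarrow> bpair set \<Rightarrow> bpair set \<Rightarrow> bpair set" where
  "bq_up n phi z0 z1 X Y = brel n phi z0 z1 `` {up_rep n phi (SOME a. a \<in> X) (SOME b. b \<in> Y)}"

definition bq_down :: "nat \<Rightarrow> (nat \<Rightarrow> complex \<Rightarrow> complex \<Rightarrow> real^4) \<Rightarrow> real^4 \<Rightarrow> real^4 \<Rightarrow> bpair set \<Rightarrow> bpair set \<Rightarrow> bpair set" where
  "bq_down n phi z0 z1 X Y = brel n phi z0 z1 `` {down_rep n phi (SOME a. a \<in> X) (SOME b. b \<in> Y)}"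

text \<open>With S(x,y) = (y down x, x up y), the bar operations are given by
  S^{-1}(a,b) = (b Up a, a Down b).\<close>

definition bar_up :: "'a set \<Rightarrow> ('a \<Rightarrow> 'a \<Rightarrow> 'a) \<Rightarrow> ('a \<Rightarrow> 'a \<Rightarrow> 'a) \<Rightarrow> 'a \<Rightarrow> 'a \<Rightarrow> 'a" where
  "bar_up X up down b a = (THE x. x \<in> X \<and> (\<exists>y\<in>X. down y x = a \<and> up x y = b))"

definition bar_down :: "'a set \<Rightarrow> ('a \<Rightarrow> 'a \<Rightarrow> 'a) \<Rightarrow> ('a \<Rightarrow> 'a \<Rightarrow> 'a) \<Rightarrow> 'a \<Rightarrow> 'a \<Rightarrow> 'a" where
  "bar_down X up down a b = (THE y. y \<in> X \<and> (\<exists>x\<in>X. down y x = a \<and> up x y = b))"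

definition generated :: "'a set \<Rightarrow> ('a \<Rightarrow> 'a \<Rightarrow> 'a) \<Rightarrow> ('a \<Rightarrow> 'a \<Rightarrow> 'a) \<Rightarrow> 'a set \<Rightarrow> 'a set" where
  "generated X up down A = \<Inter> {C. C \<subseteq> X \<and> A \<subseteq> C \<and>
      (\<forall>x\<in>C. \<forall>y\<in>C. up x y \<in> C \<and> down x y \<in> C \<and>
                     bar_up X up down x y \<in> C \<and> bar_down X up down x y \<in> C)}"

definition generating_set :: "'a set \<Rightarrow> ('a \<Rightarrow> 'a \<Rightarrow> 'a) \<Rightarrow> ('a \<Rightarrow> 'a \<Rightarrow> 'a) \<Rightarrow> 'a set \<Rightarrow> bool" where
  "generating_set X up down A \<longleftrightarrow> A \<subseteq> X \<and> generated X up down A = X"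

text \<open>Action of a word x1^e1 ... xk^ek (list of letters with signs; True = +1, False = -1):
  y op w = (...((y op_e1 x1) op_e2 x2) ...) op_ek xk.\<close>
definition word_act :: "('a \<Rightarrow> 'a \<Rightarrow> 'a) \<Rightarrow> ('a \<Rightarrow> 'a \<Rightarrow> 'a) \<Rightarrow> 'a \<Rightarrow> ('a \<times> bool) list \<Rightarrow> 'a" where
  "word_act op opbar y w = foldl (\<lambda>z (x, e). if e then op z x else opbar z x) y w"

end

theory Submission
  imports Defs "HOL-Homology.Invariance_of_Domain"
begin


locale tl = fixes n :: nat and phi :: "nat \<Rightarrow> complex \<Rightarrow> complex \<Rightarrow> real^4"
  assumes tub: "tubular n phi"
begin

definition Ni :: "nat \<Rightarrow> (real^4) set" where
  "Ni i = (\<lambda>(z,w). phi i z w) ` (sphere 0 1 \<times> cball 0 1)"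

lemma cont_i: "i < n \<Longrightarrow> continuous_on (sphere 0 1 \<times> cball 0 1) (\<lambda>(z,w). phi i z w)"
  using tub unfolding tubular_def by blast

lemma inj_all: "i < n \<Longrightarrow> j < n \<Longrightarrow> z \<in> sphere 0 1 \<Longrightarrow> w \<in> cball 0 1 \<Longrightarrow> z' \<in> sphere 0 1
   \<Longrightarrow> w' \<in> cball 0 1 \<Longrightarrow> phi i z w = phi j z' w' \<Longrightarrow> i = j \<and> z = z' \<and> w = w'"
  using tub unfolding tubular_def by blast

lemma compact_Ni: "i < n \<Longrightarrow> compact (Ni i)"
  unfolding Ni_def by (intro compact_continuous_image cont_i compact_Times) auto

lemma closed_Ni: "i < n \<Longrightarrow> closed (Ni i)"
  by (simp add: compact_Ni compact_imp_closed)

lemma nbhd_Ni: "nbhd n phi = (\<Union>i<n. Ni i)"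
  unfolding nbhd_def Ni_def by (fastforce simp: image_iff)

lemma Ni_disj: "i < n \<Longrightarrow> j < n \<Longrightarrow> i \<noteq> j \<Longrightarrow> Ni i \<inter> Ni j = {}"
proof (rule equals0I)
  fix x assume i: "i < n" "j < n" "i \<noteq> j" and "x \<in> Ni i \<inter> Ni j"
  then obtain z w z' w' where "z \<in> sphere 0 1" "w \<in> cball 0 1" "z' \<in> sphere 0 1" "w' \<in> cball 0 1"
      "x = phi i z w" "x = phi j z' w'" unfolding Ni_def by auto
  then show False using inj_all[of i j z w z' w'] i by auto
qed

lemma connected_in_Ni:
  assumes "connected S" "S \<subseteq> nbhd n phi" "x \<in> S" "x \<in> Ni i" "i < n"
  shows "S \<subseteq> Ni i"
proof (rule ccontr)
  assume nS: "\<not> S \<subseteq> Ni i"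
  define B where "B = (\<Union>j\<in>{j. j < n \<and> j \<noteq> i}. Ni j)"
  have "closed B" unfolding B_def by (intro closed_UN) (auto intro: closed_Ni)
  moreover have "S \<subseteq> Ni i \<union> B" using assms(2) unfolding nbhd_Ni B_def by auto
  moreover have "Ni i \<inter> B = {}" unfolding B_def using Ni_disj assms(5) by auto
  moreover have "B \<inter> S \<noteq> {}" using nS \<open>S \<subseteq> Ni i \<union> B\<close> by auto
  ultimately have "\<exists>A B. closed A \<and> closed B \<and> S \<subseteq> A \<union> B \<and> A \<inter> B \<inter> S = {} \<and> A \<inter> S \<noteq> {} \<and> B \<inter> S \<noteq> {}"
    using assms(3,4) closed_Ni[OF assms(5)] by (intro exI[of _ "Ni i"] exI[of _ B]) auto
  then have "\<not> connected S" unfolding connected_closed not_not .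
  then show False using assms(1) by contradiction
qed

lemma homeo_Ni: "i < n \<Longrightarrow> \<exists>g. homeomorphism (sphere 0 1 \<times> cball 0 1) (Ni i) (\<lambda>(z,w). phi i z w) g"
  unfolding Ni_def
proof (rule homeomorphism_compact)
  assume i: "i < n"
  show "compact (sphere (0::complex) 1 \<times> cball (0::complex) 1)" by (intro compact_Times compact_sphere compact_cball)
  show "continuous_on (sphere 0 1 \<times> cball 0 1) (\<lambda>(z, w). phi i z w)" by (rule cont_i[OF i])
  show "inj_on (\<lambda>(z, w). phi i z w) (sphere 0 1 \<times> cball 0 1)"
  proof (rule inj_onI)
    fix a b assume "a \<in> sphere 0 1 \<times> cball 0 1" "b \<in> sphere 0 1 \<times> cball 0 1"
      "(\<lambda>(z, w). phi i z w) a = (\<lambda>(z, w). phi i z w) b"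
    then show "a = b" using inj_all[of i i "fst a" "snd a" "fst b" "snd b"] i
      by (cases a, cases b) simp
  qed
qed simp

lemma meridian_eq:
  assumes "i < n" "z \<in> sphere 0 1" "w \<in> sphere 0 1"
  shows "meridian n phi (phi i z w) = (\<lambda>t. phi i z (w * cis (2 * pi * t)))"
proof -
  let ?P = "\<lambda>(j,z',w'). j < n \<and> z' \<in> sphere (0::complex) 1 \<and> w' \<in> sphere (0::complex) 1 \<and> phi j z' w' = phi i z w"
  have "?P (i,z,w)" using assms by auto
  then have "?P (SOME x. ?P x)" by (rule someI)
  moreover obtain j z' w' where e: "(SOME x. ?P x) = (j,z',w')" by (cases "SOME x. ?P x") blast
  ultimately have "j < n" "z' \<in> sphere 0 1" "w' \<in> sphere 0 1" "phi j z' w' = phi i z w" by auto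
  then have "(SOME x. ?P x) = (i,z,w)"
    using inj_all[of j i z' w' z w] assms e by auto
  then show ?thesis unfolding meridian_def by simp
qed

lemma bdry_nbhd: "bdry n phi \<subseteq> nbhd n phi"
  unfolding bdry_def nbhd_def by fastforce

lemma mer_cont:
  fixes T :: "real set"
  assumes cf: "continuous_on T f" and fT: "f ` T \<subseteq> bdry n phi" and cT: "connected T"
  shows "continuous_on (T \<times> {0..1}) (\<lambda>y. meridian n phi (f (fst y)) (snd y))"
proof (cases "T = {}")
  case True then show ?thesis by simp
next
  case False
  then obtain t0 where t0: "t0 \<in> T" by blast
  then obtain i z w where i: "i < n" "z \<in> sphere 0 1" "w \<in> sphere 0 1" "f t0 = phi i z w"
    using fT unfolding bdry_def by blast
  have "f t0 \<in> Ni i" using i unfolding Ni_def by (auto intro!: image_eqI[where x="(z,w)"])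
  then have fTi: "f ` T \<subseteq> Ni i"
    using connected_in_Ni[OF connected_continuous_image[OF cf cT]] fT bdry_nbhd t0 i(1) by blast
  obtain g where g: "homeomorphism (sphere 0 1 \<times> cball 0 1) (Ni i) (\<lambda>(z,w). phi i z w) g"
    using homeo_Ni[OF i(1)] by blast
  have key: "g (f t) \<in> sphere 0 1 \<times> sphere 0 1 \<and>
      meridian n phi (f t) = (\<lambda>s. phi i (fst (g (f t))) (snd (g (f t)) * cis (2 * pi * s)))"
    if t: "t \<in> T" for t
  proof -
    obtain j z w where j: "j < n" "z \<in> sphere 0 1" "w \<in> sphere 0 1" "f t = phi j z w"
      using fT t unfolding bdry_def by blast
    have ft: "f t \<in> Ni i" using fTi t by blast
    have gin: "g (f t) \<in> sphere 0 1 \<times> cball 0 1" and gf: "(\<lambda>(z,w). phi i z w) (g (f t)) = f t"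
      using g ft unfolding homeomorphism_def by blast+
    obtain z' w' where zw: "g (f t) = (z', w')" by fastforce
    have "phi i z' w' = phi j z w" using gf zw j(4) by simp
    then have "i = j \<and> z' = z \<and> w' = w" using inj_all[of i j z' w' z w] i(1) j gin zw by auto
    then show ?thesis using zw j meridian_eq[of j z w] by auto
  qed
  have "continuous_on (T \<times> {0..1}) ((\<lambda>(z,w). phi i z w) \<circ>
          (\<lambda>y. (fst (g (f (fst y))), snd (g (f (fst y))) * cis (2 * pi * snd y))))"
  proof (rule continuous_on_compose)
    have cg: "continuous_on (Ni i) g" using g unfolding homeomorphism_def by blast
    have cgf: "continuous_on (T \<times> {0..1}) (\<lambda>y. g (f (fst y)))"
      by (rule continuous_on_compose2[OF cg continuous_on_compose2[OF cf continuous_on_fst]])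
         (use fTi in auto)
    show "continuous_on (T \<times> {0..1}) (\<lambda>y. (fst (g (f (fst y))), snd (g (f (fst y))) * cis (2 * pi * snd y)))"
    proof -
      have c1: "continuous_on (T \<times> {0..1}) (\<lambda>y. fst (g (f (fst y))))" by (rule continuous_on_fst[OF cgf])
      have c2: "continuous_on (T \<times> {0..1}) (\<lambda>y. snd (g (f (fst y))))" by (rule continuous_on_snd[OF cgf])
      have c3: "continuous_on (T \<times> {0..1::real}) (\<lambda>y. cis (2 * pi * snd y))"
        by (intro continuous_on_cis continuous_on_mult continuous_on_const continuous_on_snd continuous_on_id)
      show ?thesis by (intro continuous_on_Pair continuous_on_mult c1 c2 c3)
    qed
    show "continuous_on ((\<lambda>y. (fst (g (f (fst y))), snd (g (f (fst y))) * cis (2 * pi * snd y))) ` (T \<times> {0..1}))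
       (\<lambda>(z,w). phi i z w)"
    proof (rule continuous_on_subset[OF cont_i[OF i(1)]], rule image_subsetI)
      fix y :: "real \<times> real" assume "y \<in> T \<times> {0..1}"
      then have "fst y \<in> T" by auto
      from key[OF this] have "g (f (fst y)) \<in> sphere 0 1 \<times> sphere 0 1" by blast
      then show "(fst (g (f (fst y))), snd (g (f (fst y))) * cis (2 * pi * snd y)) \<in> sphere 0 1 \<times> cball 0 1"
        by (cases "g (f (fst y))") (simp add: norm_mult)
    qed
  qed
  then show ?thesis
  proof (rule continuous_on_eq)
    fix y :: "real \<times> real" assume "y \<in> T \<times> {0..1}"
    then have "fst y \<in> T" by auto
    from key[OF this] show "((\<lambda>(z,w). phi i z w) \<circ>
          (\<lambda>y. (fst (g (f (fst y))), snd (g (f (fst y))) * cis (2 * pi * snd y)))) y = meridian n phi (f (fst y)) (snd y)"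
      by (simp add: case_prod_beta)
  qed
qed

lemma mer_props:
  assumes "p \<in> bdry n phi"
  shows "path (meridian n phi p)" "path_image (meridian n phi p) \<subseteq> bdry n phi"
    "pathstart (meridian n phi p) = p" "pathfinish (meridian n phi p) = p"
proof -
  obtain i z w where j: "i < n" "z \<in> sphere 0 1" "w \<in> sphere 0 1" "p = phi i z w"
    using assms unfolding bdry_def by blast
  have m: "meridian n phi p = (\<lambda>t. phi i z (w * cis (2 * pi * t)))" using meridian_eq j by simp
  show "path (meridian n phi p)" unfolding m path_def
  proof -
    have c: "continuous_on {0..1} (\<lambda>t::real. (z, w * cis (2 * pi * t)))"
      by (intro continuous_on_Pair continuous_on_const continuous_on_mult continuous_on_cis continuous_on_id)
    have "continuous_on {0..1} (\<lambda>t. (\<lambda>(z,w). phi i z w) (z, w * cis (2 * pi * t)))"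
      by (rule continuous_on_compose2[OF cont_i[OF j(1)] c]) (use j in \<open>auto simp: norm_mult\<close>)
    then show "continuous_on {0..1} (\<lambda>t. phi i z (w * cis (2 * pi * t)))" by simp
  qed
  show "path_image (meridian n phi p) \<subseteq> bdry n phi" unfolding m path_image_def bdry_def
    using j by (force simp: norm_mult)
  show "pathstart (meridian n phi p) = p" unfolding m pathstart_def using j by simp
  have "cis (2 * pi) = 1" by (simp add: complex_eq_iff)
  then show "pathfinish (meridian n phi p) = p" unfolding m pathfinish_def using j by simp
qed

end


definition psi :: "complex \<times> complex \<Rightarrow> complex \<times> real" where
  "psi = (\<lambda>(z,w). ((2 + Re w) *\<^sub>R z, Im w))"

lemma psi_cont: "continuous_on S psi"
  unfolding psi_def case_prod_beta by (intro continuous_intros)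

lemma psi_inj:
  assumes "cmod z = 1" "cmod z' = 1" "Re w > -2" "Re w' > -2" "psi (z,w) = psi (z',w')"
  shows "z = z' \<and> w = w'"
proof -
  have e1: "(2 + Re w) *\<^sub>R z = (2 + Re w') *\<^sub>R z'" and e2: "Im w = Im w'" using assms(5) by (auto simp: psi_def)
  have "norm ((2 + Re w) *\<^sub>R z) = norm ((2 + Re w') *\<^sub>R z')" using e1 by simp
  then have "\<bar>2 + Re w\<bar> = \<bar>2 + Re w'\<bar>" using assms(1,2) by simp
  then have r: "Re w = Re w'" using assms(3,4) by simp
  then have "z = z'" using e1 assms(3) by simp
  then show ?thesis using r e2 complex_eqI by blast
qed

context tl begin

lemma bdry_ext:
  fixes h :: "real^3 \<Rightarrow> real^4" and h' :: "real^4 \<Rightarrow> real^3"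
  assumes ball: "homeomorphism (cball 0 1) (h ` cball 0 1) h h'"
    and ballS3: "h ` cball 0 1 \<subseteq> S3"
    and nbhd_in: "nbhd n phi \<subseteq> h ` ball 0 1"
  shows "bdry n phi \<subseteq> ext n phi"
proof
  fix P assume "P \<in> bdry n phi"
  then obtain i z w where i: "i < n" "z \<in> sphere 0 1" "w \<in> sphere 0 1" "P = phi i z w"
    unfolding bdry_def by blast
  show "P \<in> ext n phi" unfolding ext_def
  proof (rule ccontr)
    assume "P \<notin> closure (S3 - nbhd n phi)"
    then obtain e where e: "e > 0" "\<And>y. y \<in> S3 - nbhd n phi \<Longrightarrow> \<not> dist y P < e"
      unfolding closure_approachable by blast
    have PN: "P \<in> nbhd n phi" using i unfolding nbhd_def by fastforce
    then obtain q where q: "q \<in> ball 0 1" "P = h q" using nbhd_in by blast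
    have ch: "continuous_on (cball 0 1) h" using ball unfolding homeomorphism_def by blast
    have qc: "q \<in> cball 0 1" using q by auto
    obtain d0 where d0: "d0 > 0" "\<And>y. y \<in> cball 0 1 \<Longrightarrow> dist y q < d0 \<Longrightarrow> dist (h y) (h q) < e"
      using ch qc e(1) unfolding continuous_on_iff by metis
    define d where "d = min d0 (1 - norm q)"
    have d: "d > 0" using d0 q by (auto simp: d_def)
    have bsub: "ball q d \<subseteq> ball 0 1"
    proof
      fix y assume "y \<in> ball q d"
      then have "dist q y < 1 - norm q" by (simp add: d_def)
      then show "y \<in> ball 0 1" using norm_triangle_ineq[of q "y - q"] by (simp add: dist_norm norm_minus_commute)
    qed
    have hN: "h y \<in> nbhd n phi" if y: "y \<in> ball q d" for y
    proof -
      have yc: "y \<in> cball 0 1" using bsub y by auto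
      have "dist y q < d0" using y by (simp add: d_def dist_commute)
      then have "dist (h y) P < e" using d0(2)[OF yc] q by simp
      moreover have "h y \<in> S3" using ballS3 yc by blast
      ultimately show ?thesis using e(2) by blast
    qed
    have PNi: "P \<in> Ni i" using i unfolding Ni_def by (auto intro!: image_eqI[where x="(z,w)"])
    have hsub: "h ` ball q d \<subseteq> Ni i"
    proof (rule connected_in_Ni[OF _ _ _ PNi i(1)])
      show "connected (h ` ball q d)"
        by (rule connected_continuous_image[OF continuous_on_subset[OF ch] connected_ball]) (use bsub in auto)
      show "h ` ball q d \<subseteq> nbhd n phi" using hN by blast
      show "P \<in> h ` ball q d" using q d by auto
    qed
    obtain g where g: "homeomorphism (sphere 0 1 \<times> cball 0 1) (Ni i) (\<lambda>(z,w). phi i z w) g"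
      using homeo_Ni[OF i(1)] by blast
    have cg: "continuous_on (Ni i) g" and gim: "g ` Ni i = sphere 0 1 \<times> cball 0 1"
      and gF: "\<And>x. x \<in> sphere 0 1 \<times> cball 0 1 \<Longrightarrow> g ((\<lambda>(z,w). phi i z w) x) = x"
      and Fg: "\<And>y. y \<in> Ni i \<Longrightarrow> (\<lambda>(z,w). phi i z w) (g y) = y"
      using g unfolding homeomorphism_def by auto
    define G where "G = psi \<circ> g \<circ> h"
    have Gc: "continuous_on (ball q d) G" unfolding G_def
      by (intro continuous_on_compose psi_cont continuous_on_subset[OF ch] continuous_on_subset[OF cg])
         (use bsub hsub in auto)
    have gin: "g (h y) \<in> sphere 0 1 \<times> cball 0 1" if "y \<in> ball q d" for y
      using hsub that gim by blast
    have Gi: "inj_on G (ball q d)"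
    proof (rule inj_onI)
      fix x y assume x: "x \<in> ball q d" and y: "y \<in> ball q d" and "G x = G y"
      obtain a b where ab: "g (h x) = (a,b)" by fastforce
      obtain a' b' where ab': "g (h y) = (a',b')" by fastforce
      have m1: "cmod a = 1" "cmod b \<le> 1" using gin[OF x] ab by auto
      have m2: "cmod a' = 1" "cmod b' \<le> 1" using gin[OF y] ab' by auto
      have "Re b > -2" "Re b' > -2" using m1 m2 abs_Re_le_cmod[of b] abs_Re_le_cmod[of b'] by auto
      then have "(a,b) = (a',b')" using psi_inj[of a a' b b'] m1 m2 \<open>G x = G y\<close> ab ab' by (simp add: G_def)
      then have "g (h x) = g (h y)" using ab ab' by simp
      then have "h x = h y" using Fg hsub x y by (metis image_subset_iff)
      moreover have "x \<in> cball 0 1" "y \<in> cball 0 1" using x y bsub by auto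
      ultimately show "x = y" using ball unfolding homeomorphism_def by metis
    qed
    have opG: "open (G ` ball q d)"
      by (rule invariance_of_domain_gen[OF open_ball Gc Gi]) simp
    have Gq: "G q = psi (z, w)"
    proof -
      have "g (h q) = (z,w)" using gF[of "(z,w)"] q(2) i by auto
      then show ?thesis by (simp add: G_def)
    qed
    have "q \<in> ball q d" using d by simp
    then have "psi (z,w) \<in> G ` ball q d" unfolding Gq[symmetric] by (rule imageI)
    then obtain ep where ep: "ep > 0" "ball (psi (z,w)) ep \<subseteq> G ` ball q d"
      using openE[OF opG] by metis
    define del where "del = min (ep / 3) (1/2)"
    have del: "del > 0" "del \<le> 1/2" "del < ep / 2" using ep by (auto simp: del_def)
    define w2 where "w2 = complex_of_real (1 + del) * w"
    have "psi (z,w2) - psi (z,w) = ((del * Re w) *\<^sub>R z, del * Im w)"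
      unfolding psi_def w2_def by (simp add: algebra_simps scaleR_diff_left)
    then have "dist (psi (z,w2)) (psi (z,w)) = norm ((del * Re w) *\<^sub>R z, del * Im w)"
      by (simp add: dist_norm)
    also have "\<dots> \<le> norm ((del * Re w) *\<^sub>R z) + norm (del * Im w)" by (rule norm_Pair_le)
    also have "\<dots> \<le> del + del"
    proof -
      have "norm ((del * Re w) *\<^sub>R z) = del * \<bar>Re w\<bar>" using i del by (simp add: abs_mult)
      also have "\<dots> \<le> del" using abs_Re_le_cmod[of w] i del by (simp add: mult_left_le)
      finally have 1: "norm ((del * Re w) *\<^sub>R z) \<le> del" .
      have "norm (del * Im w) = del * \<bar>Im w\<bar>" using del by (simp add: abs_mult)
      also have "\<dots> \<le> del" using abs_Im_le_cmod[of w] i del by (simp add: mult_left_le)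
      finally show ?thesis using 1 by simp
    qed
    finally have "dist (psi (z,w)) (psi (z,w2)) < ep" using del by (simp add: dist_commute)
    then have "psi (z,w2) \<in> ball (psi (z,w)) ep" by simp
    then have "psi (z,w2) \<in> G ` ball q d" by (rule subsetD[OF ep(2)])
    then obtain y where y: "y \<in> ball q d" "psi (z,w2) = G y" by (rule imageE)
    obtain a b where ab: "g (h y) = (a,b)" by fastforce
    have m: "cmod a = 1" "cmod b \<le> 1" using gin[OF y(1)] ab by auto
    have "cmod w2 = \<bar>1 + del\<bar> * cmod w" by (simp only: w2_def norm_mult norm_of_real)
    then have cw2: "cmod w2 = 1 + del" using i del by simp
    have r1: "Re b > -2" using m abs_Re_le_cmod[of b] by linarith
    have r2: "Re w2 > -2" using cw2 del abs_Re_le_cmod[of w2] by linarith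
    have "psi (a,b) = psi (z,w2)" using y(2) ab by (simp add: G_def)
    then have "b = w2" using psi_inj[of a z b w2] m i r1 r2 by simp
    then show False using m cw2 del by simp
  qed
qed

end


abbreviation sq :: "(real \<times> real) set" where "sq \<equiv> {0..1} \<times> {0..1}"

lemma join_eqI:
  assumes "\<And>t. t \<in> {0..1} \<Longrightarrow> p t = p' t" "\<And>t. t \<in> {0..1} \<Longrightarrow> q t = q' t" "s \<in> {0..(1::real)}"
  shows "(p +++ q) s = (p' +++ q') s"
proof (cases "s \<le> 1/2")
  case True then show ?thesis using assms(1)[of "2 * s"] assms(3) by (simp add: joinpaths_def)
next
  case False then show ?thesis using assms(2)[of "2 * s - 1"] assms(3) by (simp add: joinpaths_def)
qed

lemma join_inI:
  assumes "\<And>t. t \<in> {0..1} \<Longrightarrow> p t \<in> S" "\<And>t. t \<in> {0..1} \<Longrightarrow> q t \<in> S" "s \<in> {0..(1::real)}"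
  shows "(p +++ q) s \<in> S"
proof (cases "s \<le> 1/2")
  case True then show ?thesis using assms(1)[of "2 * s"] assms(3) by (simp add: joinpaths_def)
next
  case False then show ?thesis using assms(2)[of "2 * s - 1"] assms(3) by (simp add: joinpaths_def)
qed

lemma path_image_sub: "path_image p \<subseteq> S \<Longrightarrow> t \<in> {0..1} \<Longrightarrow> p t \<in> S"
  unfolding path_image_def by blast

lemma cont_sq_compose: "continuous_on {0..1} p \<Longrightarrow> continuous_on sq (\<lambda>y. p (snd y))"
  by (rule continuous_on_compose2[of "{0..1}" p sq snd]) (auto intro: continuous_on_snd continuous_on_id)

lemma bequiv_mk:
  assumes c1: "continuous_on sq Ka" and c2: "continuous_on sq Kb"
    and i1: "Ka ` sq \<subseteq> ext n phi" and i2: "Kb ` sq \<subseteq> ext n phi"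
    and ends: "\<And>t. t \<in> {0..1} \<Longrightarrow> Ka (t,0) = z0 \<and> Kb (t,1) = z1 \<and> Ka (t,1) = Kb (t,0) \<and> Ka (t,1) \<in> bdry n phi"
    and s0: "\<And>s. s \<in> {0..1} \<Longrightarrow> Ka (0,s) = reversepath (fst a) s \<and> Kb (0,s) = snd a s"
    and s1: "\<And>s. s \<in> {0..1} \<Longrightarrow> Ka (1,s) = reversepath (fst b) s \<and> Kb (1,s) = snd b s"
  shows "bequiv n phi z0 z1 a b"
  unfolding bequiv_def
proof (intro exI conjI ballI)
  let ?H = "\<lambda>y. ((\<lambda>s. Ka (fst y, s)) +++ (\<lambda>s. Kb (fst y, s))) (snd y)"
  show "continuous_on sq ?H"
    by (rule continuous_on_homotopic_join_lemma) (use c1 c2 ends in \<open>auto simp: pathstart_def pathfinish_def\<close>)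
  show "?H ` sq \<subseteq> ext n phi"
  proof (rule image_subsetI)
    fix y assume y: "y \<in> sq"
    show "?H y \<in> ext n phi"
      by (rule join_inI) (use y i1 i2 in \<open>auto simp: mem_Times_iff\<close>)
  qed
  fix s assume s: "s \<in> {0..(1::real)}"
  show "?H (0, s) = (reversepath (fst a) +++ snd a) s" unfolding snd_conv fst_conv
    by (rule join_eqI[OF _ _ s]) (use s0 in auto)
  show "?H (1, s) = (reversepath (fst b) +++ snd b) s" unfolding snd_conv fst_conv
    by (rule join_eqI[OF _ _ s]) (use s1 in auto)
  show "?H (s, 0) = z0" using ends[OF s] by (simp add: joinpaths_def)
  show "?H (s, 1) = z1" using ends[OF s] by (simp add: joinpaths_def)
  have "?H (s, 1/2) = Ka (s, 1)" by (simp add: joinpaths_def)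
  then show "?H (s, 1/2) \<in> bdry n phi" using ends[OF s] by metis
qed

lemma bequiv_refl:
  assumes "a \<in> bpairs n phi z0 z1" shows "bequiv n phi z0 z1 a a"
proof -
  obtain a0 a1 where a: "a = (a0,a1)" by fastforce
  have p: "path a0" "path a1" "path_image a0 \<subseteq> ext n phi" "path_image a1 \<subseteq> ext n phi"
    "pathstart a0 \<in> bdry n phi" "pathstart a1 = pathstart a0" "pathfinish a0 = z0" "pathfinish a1 = z1"
    using assms a unfolding bpairs_def by auto
  show ?thesis
  proof (rule bequiv_mk[where Ka="\<lambda>y. reversepath a0 (snd y)" and Kb="\<lambda>y. a1 (snd y)"])
    show "continuous_on sq (\<lambda>y. reversepath a0 (snd y))"
      by (rule cont_sq_compose) (use p in \<open>simp add: path_def[symmetric]\<close>)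
    show "continuous_on sq (\<lambda>y. a1 (snd y))"
      by (rule cont_sq_compose) (use p in \<open>simp add: path_def[symmetric]\<close>)
    show "(\<lambda>y. reversepath a0 (snd y)) ` sq \<subseteq> ext n phi"
      using p(3) by (auto simp: path_image_def reversepath_def)
    show "(\<lambda>y. a1 (snd y)) ` sq \<subseteq> ext n phi"
      using p(4) by (auto simp: path_image_def)
  qed (use p a in \<open>auto simp: reversepath_def pathstart_def pathfinish_def\<close>)
qed

lemma bequiv_sym:
  assumes "bequiv n phi z0 z1 a b" shows "bequiv n phi z0 z1 b a"
proof -
  obtain H where H: "continuous_on sq H" "H ` sq \<subseteq> ext n phi"
    "\<forall>s\<in>{0..1}. H (0, s) = (reversepath (fst a) +++ snd a) s \<and> H (1, s) = (reversepath (fst b) +++ snd b) s"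
    "\<forall>t\<in>{0..1}. H (t, 0) = z0 \<and> H (t, 1) = z1 \<and> H (t, 1/2) \<in> bdry n phi"
    using assms unfolding bequiv_def by blast
  let ?H = "H \<circ> (\<lambda>y. (1 - fst y, snd y))"
  have "continuous_on sq ?H"
    by (rule continuous_on_compose) (auto intro!: continuous_intros intro: continuous_on_subset[OF H(1)])
  moreover have "?H ` sq \<subseteq> ext n phi" using H(2) by (auto simp: image_subset_iff)
  ultimately show ?thesis unfolding bequiv_def using H(3,4)
    by (intro exI[of _ ?H]) auto
qed

lemma bequiv_trans:
  assumes "bequiv n phi z0 z1 a b" "bequiv n phi z0 z1 b c" shows "bequiv n phi z0 z1 a c"
proof -
  obtain H where H: "continuous_on sq H" "H ` sq \<subseteq> ext n phi"
    "\<forall>s\<in>{0..1}. H (0, s) = (reversepath (fst a) +++ snd a) s \<and> H (1, s) = (reversepath (fst b) +++ snd b) s"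
    "\<forall>t\<in>{0..1}. H (t, 0) = z0 \<and> H (t, 1) = z1 \<and> H (t, 1/2) \<in> bdry n phi"
    using assms(1) unfolding bequiv_def by blast
  obtain H' where H': "continuous_on sq H'" "H' ` sq \<subseteq> ext n phi"
    "\<forall>s\<in>{0..1}. H' (0, s) = (reversepath (fst b) +++ snd b) s \<and> H' (1, s) = (reversepath (fst c) +++ snd c) s"
    "\<forall>t\<in>{0..1}. H' (t, 0) = z0 \<and> H' (t, 1) = z1 \<and> H' (t, 1/2) \<in> bdry n phi"
    using assms(2) unfolding bequiv_def by blast
  let ?H = "\<lambda>y. if fst y \<le> 1/2 then H (2 * fst y, snd y) else H' (2 * fst y - 1, snd y)"
  have "continuous_on sq ?H"
  proof (rule continuous_on_cases_le)
    show "continuous_on {y \<in> sq. fst y \<le> 1/2} (\<lambda>y. H (2 * fst y, snd y))"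
      by (rule continuous_on_compose2[OF H(1)]) (auto intro!: continuous_intros)
    show "continuous_on {y \<in> sq. 1/2 \<le> fst y} (\<lambda>y. H' (2 * fst y - 1, snd y))"
      by (rule continuous_on_compose2[OF H'(1)]) (auto intro!: continuous_intros)
    show "continuous_on sq fst" by (intro continuous_intros)
    fix y assume y: "y \<in> sq" "fst y = 1/2"
    then have e: "2 * fst y = 1" "2 * fst y - 1 = 0" "snd y \<in> {0..1}" by (auto simp: mem_Times_iff)
    show "H (2 * fst y, snd y) = H' (2 * fst y - 1, snd y)" unfolding e(1,2) using H(3) H'(3) e(3) by auto
  qed
  moreover have "?H ` sq \<subseteq> ext n phi"
  proof (rule image_subsetI)
    fix y assume y: "y \<in> sq"
    show "?H y \<in> ext n phi"
    proof (cases "fst y \<le> 1/2")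
      case True
      then have "(2 * fst y, snd y) \<in> sq" using y by (auto simp: mem_Times_iff)
      then show ?thesis using True H(2) by auto
    next
      case False
      then have "(2 * fst y - 1, snd y) \<in> sq" using y by (auto simp: mem_Times_iff)
      then show ?thesis using False H'(2) by auto
    qed
  qed
  moreover have "\<forall>s\<in>{0..1}. ?H (0, s) = (reversepath (fst a) +++ snd a) s \<and> ?H (1, s) = (reversepath (fst c) +++ snd c) s"
    using H(3) H'(3) by auto
  moreover have "\<forall>t\<in>{0..(1::real)}. ?H (t, 0) = z0 \<and> ?H (t, 1) = z1 \<and> ?H (t, 1/2) \<in> bdry n phi"
  proof
    fix t :: real assume t: "t \<in> {0..1}"
    show "?H (t, 0) = z0 \<and> ?H (t, 1) = z1 \<and> ?H (t, 1/2) \<in> bdry n phi"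
    proof (cases "t \<le> 1/2")
      case True then have "2 * t \<in> {0..1}" using t by auto
      then show ?thesis using True H(4) by auto
    next
      case False then have "2 * t - 1 \<in> {0..1}" using t by auto
      then show ?thesis using False H'(4) by auto
    qed
  qed
  ultimately show ?thesis unfolding bequiv_def by blast
qed

lemma equiv_brel: "equiv (bpairs n phi z0 z1) (brel n phi z0 z1)"
  unfolding equiv_def refl_on_def sym_def trans_def brel_def
  using bequiv_refl bequiv_sym bequiv_trans by blast


lemma half_l: "t \<in> {0..1} \<Longrightarrow> (p +++ q) (t/2) = p (t::real)"
  by (simp add: joinpaths_def)

lemma half_r: "t \<in> {0..1} \<Longrightarrow> pathfinish p = pathstart q \<Longrightarrow> (p +++ q) ((t+1)/2) = q (t::real)"
  by (cases "t = 0") (auto simp: joinpaths_def pathfinish_def pathstart_def field_simps)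

lemma half_r': "t \<in> {0..1} \<Longrightarrow> pathfinish p = pathstart q \<Longrightarrow> (p +++ q) (1 - t/2) = reversepath q (t::real)"
  by (cases "t = 1") (auto simp: joinpaths_def pathfinish_def pathstart_def reversepath_def)

lemma bpD:
  assumes "a \<in> bpairs n phi z0 z1"
  shows "path (fst a)" "path (snd a)" "path_image (fst a) \<subseteq> ext n phi" "path_image (snd a) \<subseteq> ext n phi"
    "pathstart (fst a) \<in> bdry n phi" "pathstart (snd a) = pathstart (fst a)" "pathfinish (fst a) = z0"
    "pathfinish (snd a) = z1"
  using assms unfolding bpairs_def by auto

lemma bpI:
  assumes "path (fst a)" "path (snd a)" "path_image (fst a) \<subseteq> ext n phi" "path_image (snd a) \<subseteq> ext n phi"
    "pathstart (fst a) \<in> bdry n phi" "pathstart (snd a) = pathstart (fst a)" "pathfinish (fst a) = z0"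
    "pathfinish (snd a) = z1"
  shows "a \<in> bpairs n phi z0 z1"
  using assms unfolding bpairs_def by (cases a) auto

definition lp :: "(real^4) set \<Rightarrow> real^4 \<Rightarrow> (real \<Rightarrow> real^4) \<Rightarrow> bool" where
  "lp S z l \<longleftrightarrow> path l \<and> path_image l \<subseteq> S \<and> pathstart l = z \<and> pathfinish l = z"

lemma bequivE:
  assumes "bequiv n phi z0 z1 a b"
  obtains H where "continuous_on sq H" "H ` sq \<subseteq> ext n phi"
    "\<And>s. s \<in> {0..1} \<Longrightarrow> H (0, s) = (reversepath (fst a) +++ snd a) s"
    "\<And>s. s \<in> {0..1} \<Longrightarrow> H (1, s) = (reversepath (fst b) +++ snd b) s"
    "\<And>t. t \<in> {0..1} \<Longrightarrow> H (t, 0) = z0 \<and> H (t, 1) = z1 \<and> H (t, 1/2) \<in> bdry n phi"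
  using assms unfolding bequiv_def by blast

lemma H_in: "H ` sq \<subseteq> S \<Longrightarrow> t \<in> {0..1} \<Longrightarrow> s \<in> {0..1} \<Longrightarrow> H (t, s) \<in> S"
  by (auto simp: image_subset_iff)

lemma cont_half1: "continuous_on sq H \<Longrightarrow> continuous_on sq (\<lambda>y. H (fst y, snd y / 2))"
  by (rule continuous_on_compose2[where f="\<lambda>y. (fst y, snd y / 2)"]) (auto intro!: continuous_intros simp: mem_Times_iff)

lemma cont_half2: "continuous_on sq H \<Longrightarrow> continuous_on sq (\<lambda>y. H (fst y, (snd y + 1) / 2))"
  by (rule continuous_on_compose2[where f="\<lambda>y. (fst y, (snd y + 1) / 2)"]) (auto intro!: continuous_intros simp: mem_Times_iff)

lemma cont_half3: "continuous_on sq H \<Longrightarrow> continuous_on sq (\<lambda>y. H (fst y, 1 - snd y / 2))"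
  by (rule continuous_on_compose2[where f="\<lambda>y. (fst y, 1 - snd y / 2)"]) (auto intro!: continuous_intros simp: mem_Times_iff)

lemma slideL:
  assumes eq: "bequiv n phi z0 z1 a b" and a: "a \<in> bpairs n phi z0 z1" and b: "b \<in> bpairs n phi z0 z1"
    and l: "lp (ext n phi) z0 l"
  shows "bequiv n phi z0 z1 (fst a +++ l, snd a) (fst b +++ l, snd b)"
proof -
  obtain H where H: "continuous_on sq H" "H ` sq \<subseteq> ext n phi"
    "\<And>s. s \<in> {0..1} \<Longrightarrow> H (0, s) = (reversepath (fst a) +++ snd a) s"
    "\<And>s. s \<in> {0..1} \<Longrightarrow> H (1, s) = (reversepath (fst b) +++ snd b) s"
    "\<And>t. t \<in> {0..1} \<Longrightarrow> H (t, 0) = z0 \<and> H (t, 1) = z1 \<and> H (t, 1/2) \<in> bdry n phi"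
    using bequivE[OF eq] by blast
  have l': "path l" "path_image l \<subseteq> ext n phi" "pathstart l = z0" "pathfinish l = z0" using l unfolding lp_def by auto
  have ra: "reversepath (fst a +++ l) = reversepath l +++ reversepath (fst a)"
    by (rule reversepath_joinpaths) (use bpD(7)[OF a] l' in simp)
  have rb: "reversepath (fst b +++ l) = reversepath l +++ reversepath (fst b)"
    by (rule reversepath_joinpaths) (use bpD(7)[OF b] l' in simp)
  show ?thesis
  proof (rule bequiv_mk[where Ka="\<lambda>y. (reversepath l +++ (\<lambda>s. H (fst y, s / 2))) (snd y)"
        and Kb="\<lambda>y. H (fst y, (snd y + 1) / 2)"])
    show "continuous_on sq (\<lambda>y. (reversepath l +++ (\<lambda>s. H (fst y, s / 2))) (snd y))"
    proof -
      have c1: "continuous_on sq (\<lambda>y. reversepath l (snd y))"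
        by (rule cont_sq_compose) (use l'(1) path_reversepath[of l] in \<open>simp only: path_def\<close>)
      have pf: "pathfinish (reversepath l) = pathstart (\<lambda>s. H (t, s / 2))" if "t \<in> {0..1}" for t
        using H(5)[OF that] l'(3) by (simp add: pathstart_def)
      show ?thesis
        using continuous_on_homotopic_join_lemma[of "\<lambda>t. reversepath l" "\<lambda>t s. H (t, s / 2)", OF c1 cont_half1[OF H(1)] pf]
        by simp
    qed
    show "continuous_on sq (\<lambda>y. H (fst y, (snd y + 1) / 2))" by (rule cont_half2[OF H(1)])
    show "(\<lambda>y. (reversepath l +++ (\<lambda>s. H (fst y, s / 2))) (snd y)) ` sq \<subseteq> ext n phi"
    proof (rule image_subsetI)
      fix y assume y: "y \<in> sq"
      show "(reversepath l +++ (\<lambda>s. H (fst y, s / 2))) (snd y) \<in> ext n phi"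
      proof (rule join_inI)
        show "reversepath l t \<in> ext n phi" if "t \<in> {0..1}" for t
          using path_image_sub[of "reversepath l", OF _ that] l'(2) by simp
        show "H (fst y, t / 2) \<in> ext n phi" if "t \<in> {0..1}" for t
          using H_in[OF H(2)] that y by (auto simp: mem_Times_iff)
      qed (use y in \<open>auto simp: mem_Times_iff\<close>)
    qed
    show "(\<lambda>y. H (fst y, (snd y + 1) / 2)) ` sq \<subseteq> ext n phi"
      using H_in[OF H(2)] by (auto simp: mem_Times_iff)
  next
    fix t :: real assume t: "t \<in> {0..1}"
    have "(reversepath l +++ (\<lambda>s. H (t, s / 2))) 0 = z0"
      using l'(4) by (simp add: joinpaths_def reversepath_def pathfinish_def)
    moreover have "(reversepath l +++ (\<lambda>s. H (t, s / 2))) 1 = H (t, 1/2)"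
      by (simp add: joinpaths_def)
    ultimately show "(\<lambda>y. (reversepath l +++ (\<lambda>s. H (fst y, s / 2))) (snd y)) (t, 0) = z0 \<and>
         (\<lambda>y. H (fst y, (snd y + 1) / 2)) (t, 1) = z1 \<and>
         (\<lambda>y. (reversepath l +++ (\<lambda>s. H (fst y, s / 2))) (snd y)) (t, 1) = (\<lambda>y. H (fst y, (snd y + 1) / 2)) (t, 0) \<and>
         (\<lambda>y. (reversepath l +++ (\<lambda>s. H (fst y, s / 2))) (snd y)) (t, 1) \<in> bdry n phi"
      using H(5)[OF t] by simp
  next
    fix s :: real assume s: "s \<in> {0..1}"
    show "(\<lambda>y. (reversepath l +++ (\<lambda>s. H (fst y, s / 2))) (snd y)) (0, s) = reversepath (fst (fst a +++ l, snd a)) s \<and>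
         (\<lambda>y. H (fst y, (snd y + 1) / 2)) (0, s) = snd (fst a +++ l, snd a) s"
    proof
      show "(\<lambda>y. (reversepath l +++ (\<lambda>s. H (fst y, s / 2))) (snd y)) (0, s) = reversepath (fst (fst a +++ l, snd a)) s"
        unfolding fst_conv snd_conv ra
        by (rule join_eqI[OF _ _ s]) (simp_all add: H(3) half_l)
      have pf: "pathfinish (reversepath (fst a)) = pathstart (snd a)" using bpD(6)[OF a] by simp
      show "(\<lambda>y. H (fst y, (snd y + 1) / 2)) (0, s) = snd (fst a +++ l, snd a) s"
        using H(3)[of "(s+1)/2"] s half_r[OF s pf] by simp
    qed
    show "(\<lambda>y. (reversepath l +++ (\<lambda>s. H (fst y, s / 2))) (snd y)) (1, s) = reversepath (fst (fst b +++ l, snd b)) s \<and>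
         (\<lambda>y. H (fst y, (snd y + 1) / 2)) (1, s) = snd (fst b +++ l, snd b) s"
    proof
      show "(\<lambda>y. (reversepath l +++ (\<lambda>s. H (fst y, s / 2))) (snd y)) (1, s) = reversepath (fst (fst b +++ l, snd b)) s"
        unfolding fst_conv snd_conv rb
        by (rule join_eqI[OF _ _ s]) (simp_all add: H(4) half_l)
      have pf: "pathfinish (reversepath (fst b)) = pathstart (snd b)" using bpD(6)[OF b] by simp
      show "(\<lambda>y. H (fst y, (snd y + 1) / 2)) (1, s) = snd (fst b +++ l, snd b) s"
        using H(4)[of "(s+1)/2"] s half_r[OF s pf] by simp
    qed
  qed
qed

lemma slideR:
  assumes eq: "bequiv n phi z0 z1 a b" and a: "a \<in> bpairs n phi z0 z1" and b: "b \<in> bpairs n phi z0 z1"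
    and l: "lp (ext n phi) z1 l"
  shows "bequiv n phi z0 z1 (fst a, snd a +++ l) (fst b, snd b +++ l)"
proof -
  obtain H where H: "continuous_on sq H" "H ` sq \<subseteq> ext n phi"
    "\<And>s. s \<in> {0..1} \<Longrightarrow> H (0, s) = (reversepath (fst a) +++ snd a) s"
    "\<And>s. s \<in> {0..1} \<Longrightarrow> H (1, s) = (reversepath (fst b) +++ snd b) s"
    "\<And>t. t \<in> {0..1} \<Longrightarrow> H (t, 0) = z0 \<and> H (t, 1) = z1 \<and> H (t, 1/2) \<in> bdry n phi"
    using bequivE[OF eq] by blast
  have l': "path l" "path_image l \<subseteq> ext n phi" "pathstart l = z1" "pathfinish l = z1" using l unfolding lp_def by auto
  show ?thesis
  proof (rule bequiv_mk[where Ka="\<lambda>y. H (fst y, snd y / 2)"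
        and Kb="\<lambda>y. ((\<lambda>s. H (fst y, (s + 1) / 2)) +++ l) (snd y)"])
    show "continuous_on sq (\<lambda>y. ((\<lambda>s. H (fst y, (s + 1) / 2)) +++ l) (snd y))"
    proof -
      have c1: "continuous_on sq (\<lambda>y. l (snd y))"
        by (rule cont_sq_compose) (use l'(1) in \<open>simp only: path_def\<close>)
      have pf: "pathfinish (\<lambda>s. H (t, (s + 1) / 2)) = pathstart l" if "t \<in> {0..1}" for t
        using H(5)[OF that] l'(3) by (simp add: pathstart_def pathfinish_def)
      show ?thesis
        using continuous_on_homotopic_join_lemma[of "\<lambda>t s. H (t, (s + 1) / 2)" "\<lambda>t. l", OF cont_half2[OF H(1)] c1 pf]
        by simp
    qed
    show "continuous_on sq (\<lambda>y. H (fst y, snd y / 2))" by (rule cont_half1[OF H(1)])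
    show "(\<lambda>y. ((\<lambda>s. H (fst y, (s + 1) / 2)) +++ l) (snd y)) ` sq \<subseteq> ext n phi"
    proof (rule image_subsetI)
      fix y assume y: "y \<in> sq"
      show "((\<lambda>s. H (fst y, (s + 1) / 2)) +++ l) (snd y) \<in> ext n phi"
      proof (rule join_inI)
        show "l t \<in> ext n phi" if "t \<in> {0..1}" for t
          using path_image_sub[of l, OF _ that] l'(2) by simp
        show "H (fst y, (t + 1) / 2) \<in> ext n phi" if "t \<in> {0..1}" for t
          using H_in[OF H(2)] that y by (auto simp: mem_Times_iff)
      qed (use y in \<open>auto simp: mem_Times_iff\<close>)
    qed
    show "(\<lambda>y. H (fst y, snd y / 2)) ` sq \<subseteq> ext n phi"
      using H_in[OF H(2)] by (auto simp: mem_Times_iff)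
  next
    fix t :: real assume t: "t \<in> {0..1}"
    have "((\<lambda>s. H (t, (s + 1) / 2)) +++ l) 1 = z1"
      using l'(4) by (simp add: joinpaths_def pathfinish_def)
    moreover have "((\<lambda>s. H (t, (s + 1) / 2)) +++ l) 0 = H (t, 1/2)"
      by (simp add: joinpaths_def)
    ultimately show "(\<lambda>y. H (fst y, snd y / 2)) (t, 0) = z0 \<and>
         (\<lambda>y. ((\<lambda>s. H (fst y, (s + 1) / 2)) +++ l) (snd y)) (t, 1) = z1 \<and>
         (\<lambda>y. H (fst y, snd y / 2)) (t, 1) = (\<lambda>y. ((\<lambda>s. H (fst y, (s + 1) / 2)) +++ l) (snd y)) (t, 0) \<and>
         (\<lambda>y. H (fst y, snd y / 2)) (t, 1) \<in> bdry n phi"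
      using H(5)[OF t] by simp
  next
    fix s :: real assume s: "s \<in> {0..1}"
    have pfa: "pathfinish (reversepath (fst a)) = pathstart (snd a)" using bpD(6)[OF a] by simp
    have pfb: "pathfinish (reversepath (fst b)) = pathstart (snd b)" using bpD(6)[OF b] by simp
    show "(\<lambda>y. H (fst y, snd y / 2)) (0, s) = reversepath (fst (fst a, snd a +++ l)) s \<and>
         (\<lambda>y. ((\<lambda>s. H (fst y, (s + 1) / 2)) +++ l) (snd y)) (0, s) = snd (fst a, snd a +++ l) s"
    proof
      show "(\<lambda>y. H (fst y, snd y / 2)) (0, s) = reversepath (fst (fst a, snd a +++ l)) s"
        using H(3)[of "s/2"] s half_l[OF s] by simp
      show "(\<lambda>y. ((\<lambda>s. H (fst y, (s + 1) / 2)) +++ l) (snd y)) (0, s) = snd (fst a, snd a +++ l) s"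
        unfolding fst_conv snd_conv
        by (rule join_eqI[OF _ _ s]) (simp_all add: H(3) half_r[OF _ pfa])
    qed
    show "(\<lambda>y. H (fst y, snd y / 2)) (1, s) = reversepath (fst (fst b, snd b +++ l)) s \<and>
         (\<lambda>y. ((\<lambda>s. H (fst y, (s + 1) / 2)) +++ l) (snd y)) (1, s) = snd (fst b, snd b +++ l) s"
    proof
      show "(\<lambda>y. H (fst y, snd y / 2)) (1, s) = reversepath (fst (fst b, snd b +++ l)) s"
        using H(4)[of "s/2"] s half_l[OF s] by simp
      show "(\<lambda>y. ((\<lambda>s. H (fst y, (s + 1) / 2)) +++ l) (snd y)) (1, s) = snd (fst b, snd b +++ l) s"
        unfolding fst_conv snd_conv
        by (rule join_eqI[OF _ _ s]) (simp_all add: H(4) half_r[OF _ pfb])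
    qed
  qed
qed

lemma hp_ends:
  assumes "homotopic_paths S p q"
  obtains k where "continuous_on sq k" "k ` sq \<subseteq> S"
    "\<And>x. x \<in> {0..1} \<Longrightarrow> k (0, x) = p x" "\<And>x. x \<in> {0..1} \<Longrightarrow> k (1, x) = q x"
    "\<And>t. t \<in> {0..1} \<Longrightarrow> k (t, 0) = pathstart p \<and> k (t, 1) = pathfinish p"
proof -
  obtain k where k: "continuous_on sq k" "k \<in> sq \<rightarrow> S" "\<forall>x \<in> {0..1}. k (0,x) = p x"
     "\<forall>x \<in> {0..1}. k (1,x) = q x"
     "\<forall>t \<in> {0..1::real}. pathstart (k \<circ> Pair t) = pathstart p \<and> pathfinish (k \<circ> Pair t) = pathfinish p"
    using assms unfolding homotopic_paths by blast
  show ?thesis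
    by (rule that[of k]) (use k in \<open>auto simp: pathstart_def pathfinish_def image_subset_iff_funcset\<close>)
qed

lemma bequiv_hom:
  assumes a: "a \<in> bpairs n phi z0 z1" and b: "b \<in> bpairs n phi z0 z1"
    and h0: "homotopic_paths (ext n phi) (fst a) (fst b)" and h1: "homotopic_paths (ext n phi) (snd a) (snd b)"
  shows "bequiv n phi z0 z1 a b"
proof -
  have h0': "homotopic_paths (ext n phi) (reversepath (fst a)) (reversepath (fst b))"
    using h0 homotopic_paths_reversepath by blast
  obtain k0 where k0: "continuous_on sq k0" "k0 ` sq \<subseteq> ext n phi"
    "\<And>x. x \<in> {0..1} \<Longrightarrow> k0 (0, x) = reversepath (fst a) x" "\<And>x. x \<in> {0..1} \<Longrightarrow> k0 (1, x) = reversepath (fst b) x"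
    "\<And>t. t \<in> {0..1} \<Longrightarrow> k0 (t, 0) = pathstart (reversepath (fst a)) \<and> k0 (t, 1) = pathfinish (reversepath (fst a))"
    using hp_ends[OF h0'] by blast
  obtain k1 where k1: "continuous_on sq k1" "k1 ` sq \<subseteq> ext n phi"
    "\<And>x. x \<in> {0..1} \<Longrightarrow> k1 (0, x) = snd a x" "\<And>x. x \<in> {0..1} \<Longrightarrow> k1 (1, x) = snd b x"
    "\<And>t. t \<in> {0..1} \<Longrightarrow> k1 (t, 0) = pathstart (snd a) \<and> k1 (t, 1) = pathfinish (snd a)"
    using hp_ends[OF h1] by blast
  show ?thesis
  proof (rule bequiv_mk[OF k0(1) k1(1) k0(2) k1(2)])
    fix t :: real assume t: "t \<in> {0..1}"
    show "k0 (t, 0) = z0 \<and> k1 (t, 1) = z1 \<and> k0 (t, 1) = k1 (t, 0) \<and> k0 (t, 1) \<in> bdry n phi"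
      using k0(5)[OF t] k1(5)[OF t] bpD[OF a] by simp
  qed (use k0 k1 in auto)
qed


definition mu :: "nat \<Rightarrow> (nat \<Rightarrow> complex \<Rightarrow> complex \<Rightarrow> real^4) \<Rightarrow> (real \<Rightarrow> real^4) \<Rightarrow> real \<Rightarrow> real^4" where
  "mu n phi c = reversepath c +++ (meridian n phi (pathstart c) +++ c)"

locale tl2 = tl + assumes be: "bdry n phi \<subseteq> ext n phi"
begin

lemma mu_lp:
  assumes "path c" "path_image c \<subseteq> ext n phi" "pathstart c \<in> bdry n phi"
  shows "lp (ext n phi) (pathfinish c) (mu n phi c)"
proof -
  note m = mer_props[OF assms(3)]
  show ?thesis unfolding lp_def mu_def using assms m be
    by (auto simp: path_image_join)
qed

lemma mer_conj:
  assumes K: "continuous_on sq K" "K ` sq \<subseteq> ext n phi"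
    and e: "\<And>t. t \<in> {0..1} \<Longrightarrow> K (t,0) = z \<and> K (t,1) \<in> bdry n phi"
  shows "homotopic_paths (ext n phi)
     ((\<lambda>s. K (0,s)) +++ (meridian n phi (K (0,1)) +++ reversepath (\<lambda>s. K (0,s))))
     ((\<lambda>s. K (1,s)) +++ (meridian n phi (K (1,1)) +++ reversepath (\<lambda>s. K (1,s))))"
proof -
  define g where "g t = (\<lambda>s. K (t,s)) +++ (meridian n phi (K (t,1)) +++ reversepath (\<lambda>s. K (t,s)))" for t
  have fc: "continuous_on {0..1} (\<lambda>t. K (t, 1))"
    by (rule continuous_on_compose2[OF K(1)]) (auto intro!: continuous_intros)
  have m: "continuous_on sq (\<lambda>y. meridian n phi (K (fst y, 1)) (snd y))"
  proof -
    have "(\<lambda>t. K (t,1)) ` {0..1} \<subseteq> bdry n phi" using e by auto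
    from mer_cont[OF fc this connected_Icc] show ?thesis .
  qed
  have r: "continuous_on sq (\<lambda>y. reversepath (\<lambda>s. K (fst y, s)) (snd y))"
    unfolding reversepath_def
    by (rule continuous_on_compose2[OF K(1)]) (auto intro!: continuous_intros simp: mem_Times_iff)
  have pf1: "pathfinish (meridian n phi (K (t, 1))) = pathstart (reversepath (\<lambda>s. K (t, s)))" if "t \<in> {0..1}" for t
    using mer_props(4)[of "K (t,1)"] e[OF that] by (simp add: pathstart_def reversepath_def)
  have c_in: "continuous_on sq (\<lambda>y. (meridian n phi (K (fst y, 1)) +++ reversepath (\<lambda>s. K (fst y, s))) (snd y))"
    using continuous_on_homotopic_join_lemma[of "\<lambda>t. meridian n phi (K (t, 1))" "\<lambda>t. reversepath (\<lambda>s. K (t, s))", OF m r pf1]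
    by simp
  have K': "continuous_on sq (\<lambda>y. K (fst y, snd y))" using K(1) by simp
  have pf2: "pathfinish (\<lambda>s. K (t, s)) = pathstart (meridian n phi (K (t, 1)) +++ reversepath (\<lambda>s. K (t, s)))"
    if "t \<in> {0..1}" for t
    using mer_props(3)[of "K (t,1)"] e[OF that] by (simp add: pathfinish_def)
  have c: "continuous_on sq (\<lambda>y. g (fst y) (snd y))"
    unfolding g_def
    using continuous_on_homotopic_join_lemma[of "\<lambda>t s. K (t, s)" "\<lambda>t. meridian n phi (K (t, 1)) +++ reversepath (\<lambda>s. K (t, s))", OF K' c_in pf2]
    by simp
  have im: "g t s \<in> ext n phi" if t: "t \<in> {0..1}" and s: "s \<in> {0..1}" for t s
    unfolding g_def
  proof (rule join_inI[OF _ _ s])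
    show "K (t, x) \<in> ext n phi" if "x \<in> {0..1}" for x using H_in[OF K(2) t that] .
    show "(meridian n phi (K (t, 1)) +++ reversepath (\<lambda>s. K (t, s))) x \<in> ext n phi" if x: "x \<in> {0..1}" for x
    proof (rule join_inI[OF _ _ x])
      show "meridian n phi (K (t, 1)) y \<in> ext n phi" if "y \<in> {0..1}" for y
        using path_image_sub[OF mer_props(2)[of "K (t,1)"] that] e[OF t] be by blast
      show "reversepath (\<lambda>s. K (t, s)) y \<in> ext n phi" if "y \<in> {0..1}" for y
        using H_in[OF K(2) t, of "1 - y"] that by (simp add: reversepath_def)
    qed
  qed
  have st: "pathstart (g t) = z" "pathfinish (g t) = z" if "t \<in> {0..1}" for t
    using e[OF that] by (simp_all add: g_def pathstart_def pathfinish_def joinpaths_def reversepath_def)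
  show ?thesis
    unfolding g_def[symmetric] homotopic_paths
  proof (intro exI[of _ "\<lambda>y. g (fst y) (snd y)"] conjI ballI)
    show "continuous_on sq (\<lambda>y. g (fst y) (snd y))" by (rule c)
    show "(\<lambda>y. g (fst y) (snd y)) \<in> sq \<rightarrow> ext n phi" using im by (auto simp: mem_Times_iff)
    fix t :: real assume t: "t \<in> {0..1}"
    have "pathstart ((\<lambda>y. g (fst y) (snd y)) \<circ> Pair t) = pathstart (g t)" by (simp add: pathstart_def)
    then show "pathstart ((\<lambda>y. g (fst y) (snd y)) \<circ> Pair t) = pathstart (g 0)" using st[OF t] st[of 0] by simp
    have "pathfinish ((\<lambda>y. g (fst y) (snd y)) \<circ> Pair t) = pathfinish (g t)" by (simp add: pathfinish_def)
    then show "pathfinish ((\<lambda>y. g (fst y) (snd y)) \<circ> Pair t) = pathfinish (g 0)" using st[OF t] st[of 0] by simp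
  qed simp_all
qed

lemma muL:
  assumes eq: "bequiv n phi z0 z1 a b" and a: "a \<in> bpairs n phi z0 z1" and b: "b \<in> bpairs n phi z0 z1"
  shows "homotopic_paths (ext n phi) (mu n phi (fst a)) (mu n phi (fst b))"
proof -
  obtain H where H: "continuous_on sq H" "H ` sq \<subseteq> ext n phi"
    "\<And>s. s \<in> {0..1} \<Longrightarrow> H (0, s) = (reversepath (fst a) +++ snd a) s"
    "\<And>s. s \<in> {0..1} \<Longrightarrow> H (1, s) = (reversepath (fst b) +++ snd b) s"
    "\<And>t. t \<in> {0..1} \<Longrightarrow> H (t, 0) = z0 \<and> H (t, 1) = z1 \<and> H (t, 1/2) \<in> bdry n phi"
    using bequivE[OF eq] by blast
  let ?K = "\<lambda>y. H (fst y, snd y / 2)"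
  have hc: "homotopic_paths (ext n phi)
     ((\<lambda>s. ?K (0,s)) +++ (meridian n phi (?K (0,1)) +++ reversepath (\<lambda>s. ?K (0,s))))
     ((\<lambda>s. ?K (1,s)) +++ (meridian n phi (?K (1,1)) +++ reversepath (\<lambda>s. ?K (1,s))))"
  proof (rule mer_conj)
    show "continuous_on sq ?K" by (rule cont_half1[OF H(1)])
    show "?K ` sq \<subseteq> ext n phi" using H_in[OF H(2)] by (auto simp: mem_Times_iff)
    fix t :: real assume "t \<in> {0..1}" then show "?K (t,0) = z0 \<and> ?K (t,1) \<in> bdry n phi" using H(5) by simp
  qed
  have eqv: "homotopic_paths (ext n phi) (mu n phi (fst c))
       ((\<lambda>s. H (i, s/2)) +++ (meridian n phi (H (i,1/2)) +++ reversepath (\<lambda>s. H (i, s/2))))"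
    if c: "c \<in> bpairs n phi z0 z1" and Hi: "\<And>s. s \<in> {0..1} \<Longrightarrow> H (i, s) = (reversepath (fst c) +++ snd c) s" for c i
  proof (rule homotopic_paths_eq)
    have l: "lp (ext n phi) (pathfinish (fst c)) (mu n phi (fst c))"
      by (rule mu_lp) (use bpD[OF c] in auto)
    then show "path (mu n phi (fst c))" "path_image (mu n phi (fst c)) \<subseteq> ext n phi" unfolding lp_def by auto
    have h1: "H (i, t/2) = reversepath (fst c) t" if "t \<in> {0..1}" for t
      using Hi[of "t/2"] that half_l[OF that] by simp
    have h2: "H (i, 1/2) = pathstart (fst c)" using h1[of 1] by (simp add: reversepath_def pathstart_def)
    fix t :: real assume t: "t \<in> {0..1}"
    show "mu n phi (fst c) t = ((\<lambda>s. H (i, s/2)) +++ (meridian n phi (H (i,1/2)) +++ reversepath (\<lambda>s. H (i, s/2)))) t"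
      unfolding mu_def h2
    proof (rule join_eqI[OF _ _ t])
      show "reversepath (fst c) x = H (i, x / 2)" if "x \<in> {0..1}" for x using h1[OF that] by simp
      show "(meridian n phi (pathstart (fst c)) +++ fst c) x = (meridian n phi (pathstart (fst c)) +++ reversepath (\<lambda>s. H (i, s / 2))) x"
        if "x \<in> {0..1}" for x
      proof (rule join_eqI[OF _ _ that])
        show "fst c y = reversepath (\<lambda>s. H (i, s / 2)) y" if "y \<in> {0..1}" for y
          using h1[of "1 - y"] that by (simp add: reversepath_def)
      qed simp
    qed
  qed
  have e0: "homotopic_paths (ext n phi) (mu n phi (fst a))
       ((\<lambda>s. H (0, s/2)) +++ (meridian n phi (H (0,1/2)) +++ reversepath (\<lambda>s. H (0, s/2))))"
    by (rule eqv[OF a H(3)])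
  have e1: "homotopic_paths (ext n phi) (mu n phi (fst b))
       ((\<lambda>s. H (1, s/2)) +++ (meridian n phi (H (1,1/2)) +++ reversepath (\<lambda>s. H (1, s/2))))"
    by (rule eqv[OF b H(4)])
  show ?thesis
    using homotopic_paths_trans[OF homotopic_paths_trans[OF e0 hc[simplified]] homotopic_paths_sym[OF e1]] .
qed

lemma muR:
  assumes eq: "bequiv n phi z0 z1 a b" and a: "a \<in> bpairs n phi z0 z1" and b: "b \<in> bpairs n phi z0 z1"
  shows "homotopic_paths (ext n phi) (mu n phi (snd a)) (mu n phi (snd b))"
proof -
  obtain H where H: "continuous_on sq H" "H ` sq \<subseteq> ext n phi"
    "\<And>s. s \<in> {0..1} \<Longrightarrow> H (0, s) = (reversepath (fst a) +++ snd a) s"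
    "\<And>s. s \<in> {0..1} \<Longrightarrow> H (1, s) = (reversepath (fst b) +++ snd b) s"
    "\<And>t. t \<in> {0..1} \<Longrightarrow> H (t, 0) = z0 \<and> H (t, 1) = z1 \<and> H (t, 1/2) \<in> bdry n phi"
    using bequivE[OF eq] by blast
  let ?K = "\<lambda>y. H (fst y, 1 - snd y / 2)"
  have hc: "homotopic_paths (ext n phi)
     ((\<lambda>s. ?K (0,s)) +++ (meridian n phi (?K (0,1)) +++ reversepath (\<lambda>s. ?K (0,s))))
     ((\<lambda>s. ?K (1,s)) +++ (meridian n phi (?K (1,1)) +++ reversepath (\<lambda>s. ?K (1,s))))"
  proof (rule mer_conj)
    show "continuous_on sq ?K" by (rule cont_half3[OF H(1)])
    show "?K ` sq \<subseteq> ext n phi" using H_in[OF H(2)] by (auto simp: mem_Times_iff)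
    fix t :: real assume "t \<in> {0..1}" then show "?K (t,0) = z1 \<and> ?K (t,1) \<in> bdry n phi" using H(5) by simp
  qed
  have eqv: "homotopic_paths (ext n phi) (mu n phi (snd c))
       ((\<lambda>s. H (i, 1 - s/2)) +++ (meridian n phi (H (i, 1 - 1/2)) +++ reversepath (\<lambda>s. H (i, 1 - s/2))))"
    if c: "c \<in> bpairs n phi z0 z1" and Hi: "\<And>s. s \<in> {0..1} \<Longrightarrow> H (i, s) = (reversepath (fst c) +++ snd c) s" for c i
  proof (rule homotopic_paths_eq)
    have l: "lp (ext n phi) (pathfinish (snd c)) (mu n phi (snd c))"
      by (rule mu_lp) (use bpD[OF c] in auto)
    then show "path (mu n phi (snd c))" "path_image (mu n phi (snd c)) \<subseteq> ext n phi" unfolding lp_def by auto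
    have pf: "pathfinish (reversepath (fst c)) = pathstart (snd c)" using bpD(6)[OF c] by simp
    have h1: "H (i, 1 - t/2) = reversepath (snd c) t" if "t \<in> {0..1}" for t
    proof -
      have "1 - t/2 \<in> {0..1}" using that by auto
      then show ?thesis using Hi[of "1 - t/2"] half_r'[OF that pf] by simp
    qed
    have h2: "H (i, 1 - 1/2) = pathstart (snd c)" using h1[of 1] by (simp add: reversepath_def pathstart_def)
    fix t :: real assume t: "t \<in> {0..1}"
    show "mu n phi (snd c) t = ((\<lambda>s. H (i, 1 - s/2)) +++ (meridian n phi (H (i, 1 - 1/2)) +++ reversepath (\<lambda>s. H (i, 1 - s/2)))) t"
      unfolding mu_def h2
    proof (rule join_eqI[OF _ _ t])
      show "reversepath (snd c) x = H (i, 1 - x / 2)" if "x \<in> {0..1}" for x using h1[OF that] by simp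
      show "(meridian n phi (pathstart (snd c)) +++ snd c) x = (meridian n phi (pathstart (snd c)) +++ reversepath (\<lambda>s. H (i, 1 - s / 2))) x"
        if "x \<in> {0..1}" for x
      proof (rule join_eqI[OF _ _ that])
        show "snd c y = reversepath (\<lambda>s. H (i, 1 - s / 2)) y" if "y \<in> {0..1}" for y
          using h1[of "1 - y"] that by (simp add: reversepath_def)
      qed simp
    qed
  qed
  have e0: "homotopic_paths (ext n phi) (mu n phi (snd a))
       ((\<lambda>s. H (0, 1 - s/2)) +++ (meridian n phi (H (0, 1 - 1/2)) +++ reversepath (\<lambda>s. H (0, 1 - s/2))))"
    by (rule eqv[OF a H(3)])
  have e1: "homotopic_paths (ext n phi) (mu n phi (snd b))
       ((\<lambda>s. H (1, 1 - s/2)) +++ (meridian n phi (H (1, 1 - 1/2)) +++ reversepath (\<lambda>s. H (1, 1 - s/2))))"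
    by (rule eqv[OF b H(4)])
  show ?thesis
    using homotopic_paths_trans[OF homotopic_paths_trans[OF e0 hc[unfolded fst_conv snd_conv]] homotopic_paths_sym[OF e1]] .
qed

end


lemma lp_join: "lp S z p \<Longrightarrow> lp S z q \<Longrightarrow> lp S z (p +++ q)"
  unfolding lp_def by (auto simp: path_image_join)
lemma lp_rev: "lp S z p \<Longrightarrow> lp S z (reversepath p)"
  unfolding lp_def by auto
lemma lp_const: "z \<in> S \<Longrightarrow> lp S z (linepath z z)"
  unfolding lp_def by auto
lemma hp_assoc: "lp S z p \<Longrightarrow> lp S z q \<Longrightarrow> lp S z r \<Longrightarrow> homotopic_paths S (p +++ (q +++ r)) ((p +++ q) +++ r)"
  unfolding lp_def by (intro homotopic_paths_assoc) auto
lemma hp_join: "homotopic_paths S p p' \<Longrightarrow> homotopic_paths S q q' \<Longrightarrow> lp S z p \<Longrightarrow> lp S z q \<Longrightarrow>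
   homotopic_paths S (p +++ q) (p' +++ q')"
  unfolding lp_def by (intro homotopic_paths_join) auto
lemma hp_rid: "lp S z p \<Longrightarrow> homotopic_paths S (p +++ linepath z z) p"
  unfolding lp_def using homotopic_paths_rid by fastforce
lemma hp_lid: "lp S z p \<Longrightarrow> homotopic_paths S (linepath z z +++ p) p"
  unfolding lp_def using homotopic_paths_lid by fastforce
lemma hp_linv: "lp S z p \<Longrightarrow> homotopic_paths S (reversepath p +++ p) (linepath z z)"
  unfolding lp_def using homotopic_paths_linv by fastforce
lemma hp_rinv: "lp S z p \<Longrightarrow> homotopic_paths S (p +++ reversepath p) (linepath z z)"
  unfolding lp_def using homotopic_paths_rinv by fastforce
lemma hp_lp: "homotopic_paths S p q \<Longrightarrow> lp S z p \<Longrightarrow> lp S z q"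
  unfolding lp_def using homotopic_paths_imp_path homotopic_paths_imp_subset
    homotopic_paths_imp_pathstart homotopic_paths_imp_pathfinish by metis
lemma hp_rev: "homotopic_paths S p q \<Longrightarrow> homotopic_paths S (reversepath p) (reversepath q)"
  using homotopic_paths_reversepath by blast
lemma hp_refl: "lp S z p \<Longrightarrow> homotopic_paths S p p"
  unfolding lp_def by simp
lemma hp_sym: "homotopic_paths S p q \<Longrightarrow> homotopic_paths S q p"
  by (rule homotopic_paths_sym)
lemma hp_trans: "homotopic_paths S p q \<Longrightarrow> homotopic_paths S q r \<Longrightarrow> homotopic_paths S p r"
  by (rule homotopic_paths_trans)

locale tl3 = tl2 + fixes z0 z1 :: "real^4"
  assumes z0E: "z0 \<in> ext n phi" and z1E: "z1 \<in> ext n phi"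
begin

abbreviation "BP \<equiv> bpairs n phi z0 z1"
abbreviation "R \<equiv> brel n phi z0 z1"
abbreviation "XX \<equiv> topbiq n phi z0 z1"
abbreviation "E \<equiv> ext n phi"

definition rep :: "bpair set \<Rightarrow> bpair" where "rep C = (SOME a. a \<in> C)"
definition LL :: "bpair set \<Rightarrow> (real \<Rightarrow> real^4) \<Rightarrow> bpair set" where
  "LL C l = R `` {(fst (rep C) +++ l, snd (rep C))}"
definition RR :: "bpair set \<Rightarrow> (real \<Rightarrow> real^4) \<Rightarrow> bpair set" where
  "RR C l = R `` {(fst (rep C), snd (rep C) +++ l)}"
definition MU :: "bpair set \<Rightarrow> real \<Rightarrow> real^4" where "MU C = mu n phi (fst (rep C))"
definition MU' :: "bpair set \<Rightarrow> real \<Rightarrow> real^4" where "MU' C = mu n phi (snd (rep C))"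

lemma up_eq: "bq_up n phi z0 z1 C D = LL C (MU D)"
  unfolding bq_up_def LL_def MU_def rep_def up_rep_def mu_def by simp
lemma down_eq: "bq_down n phi z0 z1 C D = RR C (MU' D)"
  unfolding bq_down_def RR_def MU'_def rep_def down_rep_def mu_def by simp

lemma XX_def': "XX = BP // R" unfolding topbiq_def ..

lemma R_iff: "(r, s) \<in> R \<longleftrightarrow> r \<in> BP \<and> s \<in> BP \<and> bequiv n phi z0 z1 r s"
  unfolding brel_def by simp

lemma cls_X: "r \<in> BP \<Longrightarrow> R `` {r} \<in> XX"
  unfolding XX_def' by (rule quotientI)

lemma mem_cls: assumes "C \<in> XX" "r \<in> C" shows "C = R `` {r}" "r \<in> BP"
proof -
  obtain x where x: "x \<in> BP" "C = R `` {x}" using assms(1) unfolding XX_def' by (auto elim: quotientE)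
  then have "(x, r) \<in> R" using assms(2) by simp
  then show "r \<in> BP" by (simp add: R_iff)
  show "C = R `` {r}" using x \<open>(x, r) \<in> R\<close> equiv_class_eq[OF equiv_brel] by metis
qed

lemma rep_in: assumes "C \<in> XX" shows "rep C \<in> C" "rep C \<in> BP" "C = R `` {rep C}"
proof -
  obtain x where x: "x \<in> BP" "C = R `` {x}" using assms(1) unfolding XX_def' by (auto elim: quotientE)
  then have "C \<noteq> {}" using equiv_class_self[OF equiv_brel x(1)] by blast
  then show r: "rep C \<in> C" unfolding rep_def by (metis ex_in_conv someI)
  show "rep C \<in> BP" "C = R `` {rep C}" using mem_cls[OF assms r] by auto
qed

lemma cls_eq: "r \<in> BP \<Longrightarrow> s \<in> BP \<Longrightarrow> bequiv n phi z0 z1 r s \<Longrightarrow> R `` {r} = R `` {s}"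
  using equiv_class_eq[OF equiv_brel] R_iff by blast

lemma lrep_bp: assumes r: "r \<in> BP" and l: "lp E z0 l" shows "(fst r +++ l, snd r) \<in> BP"
proof -
  note b = bpD[OF r] and l' = l[unfolded lp_def]
  show ?thesis
  proof (rule bpI, unfold fst_conv snd_conv)
    show "path (fst r +++ l)" using b l' by (intro path_join_imp) auto
    show "path_image (fst r +++ l) \<subseteq> E" using b l' path_image_join_subset[of "fst r" l] by blast
  qed (use b l' in auto)
qed
lemma rrep_bp: assumes r: "r \<in> BP" and l: "lp E z1 l" shows "(fst r, snd r +++ l) \<in> BP"
proof -
  note b = bpD[OF r] and l' = l[unfolded lp_def]
  show ?thesis
  proof (rule bpI, unfold fst_conv snd_conv)
    show "path (snd r +++ l)" using b l' by (intro path_join_imp) auto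
    show "path_image (snd r +++ l) \<subseteq> E" using b l' path_image_join_subset[of "snd r" l] by blast
  qed (use b l' in auto)
qed

lemma L_eq: assumes "C \<in> XX" "r \<in> C" "lp E z0 l" shows "LL C l = R `` {(fst r +++ l, snd r)}"
proof -
  have r: "r \<in> BP" using mem_cls[OF assms(1,2)] by simp
  have "(rep C, r) \<in> R" using rep_in[OF assms(1)] assms(2) by (metis Image_singleton_iff)
  then have "bequiv n phi z0 z1 (rep C) r" by (simp add: R_iff)
  then have "bequiv n phi z0 z1 (fst (rep C) +++ l, snd (rep C)) (fst r +++ l, snd r)"
    by (rule slideL[OF _ rep_in(2)[OF assms(1)] r assms(3)])
  then show ?thesis unfolding LL_def
    by (rule cls_eq[OF lrep_bp[OF rep_in(2)[OF assms(1)] assms(3)] lrep_bp[OF r assms(3)]])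
qed

lemma R_eq: assumes "C \<in> XX" "r \<in> C" "lp E z1 l" shows "RR C l = R `` {(fst r, snd r +++ l)}"
proof -
  have r: "r \<in> BP" using mem_cls[OF assms(1,2)] by simp
  have "(rep C, r) \<in> R" using rep_in[OF assms(1)] assms(2) by (metis Image_singleton_iff)
  then have "bequiv n phi z0 z1 (rep C) r" by (simp add: R_iff)
  then have "bequiv n phi z0 z1 (fst (rep C), snd (rep C) +++ l) (fst r, snd r +++ l)"
    by (rule slideR[OF _ rep_in(2)[OF assms(1)] r assms(3)])
  then show ?thesis unfolding RR_def
    by (rule cls_eq[OF rrep_bp[OF rep_in(2)[OF assms(1)] assms(3)] rrep_bp[OF r assms(3)]])
qed

lemma L_in: "C \<in> XX \<Longrightarrow> lp E z0 l \<Longrightarrow> LL C l \<in> XX"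
  unfolding LL_def by (rule cls_X, rule lrep_bp[OF rep_in(2)])
lemma R_in: "C \<in> XX \<Longrightarrow> lp E z1 l \<Longrightarrow> RR C l \<in> XX"
  unfolding RR_def by (rule cls_X, rule rrep_bp[OF rep_in(2)])

lemma lrep_mem: "C \<in> XX \<Longrightarrow> lp E z0 l \<Longrightarrow> (fst (rep C) +++ l, snd (rep C)) \<in> LL C l"
  unfolding LL_def using equiv_class_self[OF equiv_brel] lrep_bp[OF rep_in(2)] by blast
lemma rrep_mem: "C \<in> XX \<Longrightarrow> lp E z1 l \<Longrightarrow> (fst (rep C), snd (rep C) +++ l) \<in> RR C l"
  unfolding RR_def using equiv_class_self[OF equiv_brel] rrep_bp[OF rep_in(2)] by blast

lemma fst_lp: "r \<in> BP \<Longrightarrow> homotopic_paths E (fst r) (fst r)"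
  using bpD by simp
lemma snd_lp: "r \<in> BP \<Longrightarrow> homotopic_paths E (snd r) (snd r)"
  using bpD by simp

lemma L_hom: assumes "C \<in> XX" "lp E z0 l" "homotopic_paths E l l'" shows "LL C l = LL C l'"
proof -
  have l': "lp E z0 l'" by (rule hp_lp[OF assms(3,2)])
  have r: "rep C \<in> BP" by (rule rep_in(2)[OF assms(1)])
  have "homotopic_paths E (fst (rep C) +++ l) (fst (rep C) +++ l')"
    by (rule homotopic_paths_join[OF fst_lp[OF r] assms(3)]) (use bpD(7)[OF r] assms(2) in \<open>simp add: lp_def\<close>)
  then have "bequiv n phi z0 z1 (fst (rep C) +++ l, snd (rep C)) (fst (rep C) +++ l', snd (rep C))"
    by (intro bequiv_hom lrep_bp r assms(2) l') (simp_all add: snd_lp[OF r] del: homotopic_paths_refl)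
  then show ?thesis unfolding LL_def by (rule cls_eq[OF lrep_bp[OF r assms(2)] lrep_bp[OF r l']])
qed

lemma R_hom: assumes "C \<in> XX" "lp E z1 l" "homotopic_paths E l l'" shows "RR C l = RR C l'"
proof -
  have l': "lp E z1 l'" by (rule hp_lp[OF assms(3,2)])
  have r: "rep C \<in> BP" by (rule rep_in(2)[OF assms(1)])
  have "homotopic_paths E (snd (rep C) +++ l) (snd (rep C) +++ l')"
    by (rule homotopic_paths_join[OF snd_lp[OF r] assms(3)]) (use bpD(8)[OF r] assms(2) in \<open>simp add: lp_def\<close>)
  then have "bequiv n phi z0 z1 (fst (rep C), snd (rep C) +++ l) (fst (rep C), snd (rep C) +++ l')"
    by (intro bequiv_hom rrep_bp r assms(2) l') (simp_all add: fst_lp[OF r] del: homotopic_paths_refl)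
  then show ?thesis unfolding RR_def by (rule cls_eq[OF rrep_bp[OF r assms(2)] rrep_bp[OF r l']])
qed

lemma rep_facts: assumes "C \<in> XX"
  shows "path (fst (rep C))" "path_image (fst (rep C)) \<subseteq> E" "pathstart (fst (rep C)) \<in> bdry n phi"
    "pathfinish (fst (rep C)) = z0" "path (snd (rep C))" "path_image (snd (rep C)) \<subseteq> E"
    "pathstart (snd (rep C)) = pathstart (fst (rep C))" "pathfinish (snd (rep C)) = z1"
  using bpD[OF rep_in(2)[OF assms]] by auto

lemma L_comp: assumes C: "C \<in> XX" and l1: "lp E z0 l1" and l2: "lp E z0 l2"
  shows "LL (LL C l1) l2 = LL C (l1 +++ l2)"
proof -
  let ?r = "rep C"
  have "LL (LL C l1) l2 = R `` {((fst ?r +++ l1) +++ l2, snd ?r)}"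
    using L_eq[OF L_in[OF C l1] lrep_mem[OF C l1] l2] by simp
  also have "\<dots> = R `` {(fst ?r +++ (l1 +++ l2), snd ?r)}"
  proof (rule cls_eq)
    have r: "?r \<in> BP" by (rule rep_in(2)[OF C])
    show "((fst ?r +++ l1) +++ l2, snd ?r) \<in> BP" by (rule lrep_bp[OF lrep_bp[OF r l1, simplified] l2, simplified])
    show b2: "(fst ?r +++ (l1 +++ l2), snd ?r) \<in> BP" by (rule lrep_bp[OF r lp_join[OF l1 l2], simplified])
    show "bequiv n phi z0 z1 ((fst ?r +++ l1) +++ l2, snd ?r) (fst ?r +++ (l1 +++ l2), snd ?r)"
    proof (rule bequiv_hom[OF lrep_bp[OF lrep_bp[OF r l1, simplified] l2, simplified] b2, unfolded fst_conv snd_conv])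
      show "homotopic_paths E ((fst ?r +++ l1) +++ l2) (fst ?r +++ (l1 +++ l2))"
        by (rule homotopic_paths_sym, rule homotopic_paths_assoc)
           (use rep_facts[OF C] l1 l2 in \<open>simp_all add: lp_def\<close>)
      show "homotopic_paths E (snd ?r) (snd ?r)" using rep_facts[OF C] by simp
    qed
  qed
  finally show ?thesis unfolding LL_def .
qed

lemma R_comp: assumes C: "C \<in> XX" and l1: "lp E z1 l1" and l2: "lp E z1 l2"
  shows "RR (RR C l1) l2 = RR C (l1 +++ l2)"
proof -
  let ?r = "rep C"
  have "RR (RR C l1) l2 = R `` {(fst ?r, (snd ?r +++ l1) +++ l2)}"
    using R_eq[OF R_in[OF C l1] rrep_mem[OF C l1] l2] by simp
  also have "\<dots> = R `` {(fst ?r, snd ?r +++ (l1 +++ l2))}"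
  proof (rule cls_eq)
    have r: "?r \<in> BP" by (rule rep_in(2)[OF C])
    show "(fst ?r, (snd ?r +++ l1) +++ l2) \<in> BP" by (rule rrep_bp[OF rrep_bp[OF r l1, simplified] l2, simplified])
    show b2: "(fst ?r, snd ?r +++ (l1 +++ l2)) \<in> BP" by (rule rrep_bp[OF r lp_join[OF l1 l2], simplified])
    show "bequiv n phi z0 z1 (fst ?r, (snd ?r +++ l1) +++ l2) (fst ?r, snd ?r +++ (l1 +++ l2))"
    proof (rule bequiv_hom[OF rrep_bp[OF rrep_bp[OF r l1, simplified] l2, simplified] b2, unfolded fst_conv snd_conv])
      show "homotopic_paths E ((snd ?r +++ l1) +++ l2) (snd ?r +++ (l1 +++ l2))"
        by (rule homotopic_paths_sym, rule homotopic_paths_assoc)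
           (use rep_facts[OF C] l1 l2 in \<open>simp_all add: lp_def\<close>)
      show "homotopic_paths E (fst ?r) (fst ?r)" using rep_facts[OF C] by simp
    qed
  qed
  finally show ?thesis unfolding RR_def .
qed

lemma L_id: assumes C: "C \<in> XX" shows "LL C (linepath z0 z0) = C"
proof -
  let ?r = "rep C"
  have r: "?r \<in> BP" by (rule rep_in(2)[OF C])
  have b: "(fst ?r +++ linepath z0 z0, snd ?r) \<in> BP" by (rule lrep_bp[OF r lp_const[OF z0E]])
  have "bequiv n phi z0 z1 (fst ?r +++ linepath z0 z0, snd ?r) ?r"
  proof (rule bequiv_hom[OF b r, unfolded fst_conv snd_conv])
    show "homotopic_paths E (fst ?r +++ linepath z0 z0) (fst ?r)"
      using homotopic_paths_rid[of "fst ?r" E] rep_facts[OF C] by simp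
    show "homotopic_paths E (snd ?r) (snd ?r)" using rep_facts[OF C] by simp
  qed
  then have "LL C (linepath z0 z0) = R `` {?r}" unfolding LL_def by (rule cls_eq[OF b r])
  then show ?thesis using rep_in(3)[OF C] by simp
qed

lemma R_id: assumes C: "C \<in> XX" shows "RR C (linepath z1 z1) = C"
proof -
  let ?r = "rep C"
  have r: "?r \<in> BP" by (rule rep_in(2)[OF C])
  have b: "(fst ?r, snd ?r +++ linepath z1 z1) \<in> BP" by (rule rrep_bp[OF r lp_const[OF z1E]])
  have "bequiv n phi z0 z1 (fst ?r, snd ?r +++ linepath z1 z1) ?r"
  proof (rule bequiv_hom[OF b r, unfolded fst_conv snd_conv])
    show "homotopic_paths E (snd ?r +++ linepath z1 z1) (snd ?r)"
      using homotopic_paths_rid[of "snd ?r" E] rep_facts[OF C] by simp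
    show "homotopic_paths E (fst ?r) (fst ?r)" using rep_facts[OF C] by simp
  qed
  then have "RR C (linepath z1 z1) = R `` {?r}" unfolding RR_def by (rule cls_eq[OF b r])
  then show ?thesis using rep_in(3)[OF C] by simp
qed

lemma LR_comm: assumes C: "C \<in> XX" and l: "lp E z0 l" and l': "lp E z1 l'"
  shows "LL (RR C l') l = RR (LL C l) l'"
  using L_eq[OF R_in[OF C l'] rrep_mem[OF C l'] l] R_eq[OF L_in[OF C l] lrep_mem[OF C l] l'] by simp

lemma MU_eq: assumes C: "C \<in> XX" and r: "r \<in> C" shows "homotopic_paths E (MU C) (mu n phi (fst r))"
proof -
  have "(rep C, r) \<in> R" using rep_in[OF C] r by (metis Image_singleton_iff)
  then have "bequiv n phi z0 z1 (rep C) r" "r \<in> BP" by (simp_all add: R_iff)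
  from muL[OF this(1) rep_in(2)[OF C] this(2)] show ?thesis unfolding MU_def .
qed

lemma MU'_eq: assumes C: "C \<in> XX" and r: "r \<in> C" shows "homotopic_paths E (MU' C) (mu n phi (snd r))"
proof -
  have "(rep C, r) \<in> R" using rep_in[OF C] r by (metis Image_singleton_iff)
  then have "bequiv n phi z0 z1 (rep C) r" "r \<in> BP" by (simp_all add: R_iff)
  from muR[OF this(1) rep_in(2)[OF C] this(2)] show ?thesis unfolding MU'_def .
qed

lemma MU_lp: "C \<in> XX \<Longrightarrow> lp E z0 (MU C)"
  unfolding MU_def using mu_lp[of "fst (rep C)"] rep_facts[of C] by simp
lemma MU'_lp: "C \<in> XX \<Longrightarrow> lp E z1 (MU' C)"
  unfolding MU'_def using mu_lp[of "snd (rep C)"] rep_facts[of C] by simp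

lemma MU_R: "C \<in> XX \<Longrightarrow> lp E z1 l \<Longrightarrow> homotopic_paths E (MU (RR C l)) (MU C)"
  using MU_eq[OF R_in rrep_mem] unfolding MU_def[of C] by simp
lemma MU'_L: "C \<in> XX \<Longrightarrow> lp E z0 l \<Longrightarrow> homotopic_paths E (MU' (LL C l)) (MU' C)"
  using MU'_eq[OF L_in lrep_mem] unfolding MU'_def[of C] by simp

lemma mu_join:
  assumes a: "path a" "path_image a \<subseteq> E" "pathstart a \<in> bdry n phi" "pathfinish a = z"
    and l: "lp E z l"
  shows "homotopic_paths E (mu n phi (a +++ l)) (reversepath l +++ (mu n phi a +++ l))"
proof -
  let ?m = "meridian n phi (pathstart a)"
  have m: "path ?m" "path_image ?m \<subseteq> E" "pathstart ?m = pathstart a" "pathfinish ?m = pathstart a"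
    using mer_props[OF a(3)] be by auto
  have l': "path l" "path_image l \<subseteq> E" "pathstart l = z" "pathfinish l = z" using l unfolding lp_def by auto
  have e1: "mu n phi (a +++ l) = (reversepath l +++ reversepath a) +++ (?m +++ (a +++ l))"
    unfolding mu_def using reversepath_joinpaths[of a l] a(4) l'(3) by simp
  have s1: "homotopic_paths E ((reversepath l +++ reversepath a) +++ (?m +++ (a +++ l)))
      (reversepath l +++ (reversepath a +++ (?m +++ (a +++ l))))"
    by (rule homotopic_paths_sym, rule homotopic_paths_assoc) (use a m l' in \<open>simp_all add: path_image_join\<close>)
  have s2: "homotopic_paths E (reversepath a +++ (?m +++ (a +++ l))) ((reversepath a +++ (?m +++ a)) +++ l)"
  proof -
    have as1: "homotopic_paths E (?m +++ (a +++ l)) ((?m +++ a) +++ l)"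
      by (rule homotopic_paths_assoc) (use a m l' in \<open>simp_all add: path_image_join\<close>)
    have "homotopic_paths E (reversepath a +++ (?m +++ (a +++ l))) (reversepath a +++ ((?m +++ a) +++ l))"
      by (rule homotopic_paths_join[OF _ as1]) (use a m l' in \<open>simp_all add: path_image_join\<close>)
    moreover have "homotopic_paths E (reversepath a +++ ((?m +++ a) +++ l)) ((reversepath a +++ (?m +++ a)) +++ l)"
      by (rule homotopic_paths_assoc) (use a m l' in \<open>simp_all add: path_image_join\<close>)
    ultimately show ?thesis by (rule homotopic_paths_trans)
  qed
  have s3: "homotopic_paths E (reversepath l +++ (reversepath a +++ (?m +++ (a +++ l))))
      (reversepath l +++ ((reversepath a +++ (?m +++ a)) +++ l))"
    by (rule homotopic_paths_join[OF _ s2]) (use a m l' in \<open>simp_all add: path_image_join\<close>)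
  show ?thesis unfolding e1 using homotopic_paths_trans[OF s1 s3] unfolding mu_def .
qed

lemma MU_L: assumes C: "C \<in> XX" and l: "lp E z0 l"
  shows "homotopic_paths E (MU (LL C l)) (reversepath l +++ (MU C +++ l))"
proof -
  have "homotopic_paths E (MU (LL C l)) (mu n phi (fst (rep C) +++ l))"
    using MU_eq[OF L_in[OF C l] lrep_mem[OF C l]] by simp
  also have "homotopic_paths E \<dots> (reversepath l +++ (MU C +++ l))"
    unfolding MU_def by (rule mu_join[OF rep_facts(1-4)[OF C] l])
  finally show ?thesis .
qed

lemma MU'_R: assumes C: "C \<in> XX" and l: "lp E z1 l"
  shows "homotopic_paths E (MU' (RR C l)) (reversepath l +++ (MU' C +++ l))"
proof -
  have "homotopic_paths E (MU' (RR C l)) (mu n phi (snd (rep C) +++ l))"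
    using MU'_eq[OF R_in[OF C l] rrep_mem[OF C l]] by simp
  also have "homotopic_paths E \<dots> (reversepath l +++ (MU' C +++ l))"
    unfolding MU'_def by (rule mu_join) (use rep_facts[OF C] l in auto)
  finally show ?thesis .
qed

end


context tl3 begin

abbreviation "bup \<equiv> bq_up n phi z0 z1"
abbreviation "bdn \<equiv> bq_down n phi z0 z1"

lemma up_in: "C \<in> XX \<Longrightarrow> D \<in> XX \<Longrightarrow> bup C D \<in> XX"
  unfolding up_eq by (rule L_in, assumption, rule MU_lp)
lemma dn_in: "C \<in> XX \<Longrightarrow> D \<in> XX \<Longrightarrow> bdn C D \<in> XX"
  unfolding down_eq by (rule R_in, assumption, rule MU'_lp)

lemma S_inv:
  assumes A: "A \<in> XX" and B: "B \<in> XX"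
  shows "bdn (RR A (reversepath (MU' B))) (LL B (reversepath (MU A))) = A"
    "bup (LL B (reversepath (MU A))) (RR A (reversepath (MU' B))) = B"
proof -
  let ?x = "LL B (reversepath (MU A))" and ?y = "RR A (reversepath (MU' B))"
  have lA: "lp E z0 (MU A)" "lp E z1 (MU' A)" using MU_lp[OF A] MU'_lp[OF A] .
  have lB: "lp E z0 (MU B)" "lp E z1 (MU' B)" using MU_lp[OF B] MU'_lp[OF B] .
  have x: "?x \<in> XX" by (rule L_in[OF B lp_rev[OF lA(1)]])
  have y: "?y \<in> XX" by (rule R_in[OF A lp_rev[OF lB(2)]])
  have "bdn ?y ?x = RR ?y (MU' ?x)" by (rule down_eq)
  also have "\<dots> = RR A (reversepath (MU' B) +++ MU' ?x)"
    by (rule R_comp[OF A lp_rev[OF lB(2)] MU'_lp[OF x]])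
  also have "\<dots> = RR A (reversepath (MU' B) +++ MU' B)"
    by (rule R_hom[OF A lp_join[OF lp_rev[OF lB(2)] MU'_lp[OF x]]],
        rule hp_join[OF hp_refl[OF lp_rev[OF lB(2)]] MU'_L[OF B lp_rev[OF lA(1)]] lp_rev[OF lB(2)] MU'_lp[OF x]])
  also have "\<dots> = RR A (linepath z1 z1)"
    by (rule R_hom[OF A lp_join[OF lp_rev[OF lB(2)] lB(2)] hp_linv[OF lB(2)]])
  also have "\<dots> = A" by (rule R_id[OF A])
  finally show "bdn ?y ?x = A" .
  have "bup ?x ?y = LL ?x (MU ?y)" by (rule up_eq)
  also have "\<dots> = LL B (reversepath (MU A) +++ MU ?y)"
    by (rule L_comp[OF B lp_rev[OF lA(1)] MU_lp[OF y]])
  also have "\<dots> = LL B (reversepath (MU A) +++ MU A)"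
    by (rule L_hom[OF B lp_join[OF lp_rev[OF lA(1)] MU_lp[OF y]]],
        rule hp_join[OF hp_refl[OF lp_rev[OF lA(1)]] MU_R[OF A lp_rev[OF lB(2)]] lp_rev[OF lA(1)] MU_lp[OF y]])
  also have "\<dots> = LL B (linepath z0 z0)"
    by (rule L_hom[OF B lp_join[OF lp_rev[OF lA(1)] lA(1)] hp_linv[OF lA(1)]])
  also have "\<dots> = B" by (rule L_id[OF B])
  finally show "bup ?x ?y = B" .
qed

lemma bar_up_eq:
  assumes B: "B \<in> XX" and A: "A \<in> XX"
  shows "bar_up XX bup bdn B A = LL B (reversepath (MU A))"
  unfolding bar_up_def
proof (rule the_equality)
  have lA: "lp E z0 (MU A)" using MU_lp[OF A] .
  have lB: "lp E z1 (MU' B)" using MU'_lp[OF B] .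
  show "LL B (reversepath (MU A)) \<in> XX \<and> (\<exists>y\<in>XX. bdn y (LL B (reversepath (MU A))) = A \<and> bup (LL B (reversepath (MU A))) y = B)"
    using L_in[OF B lp_rev[OF lA]] R_in[OF A lp_rev[OF lB]] S_inv[OF A B] by blast
  fix x assume "x \<in> XX \<and> (\<exists>y\<in>XX. bdn y x = A \<and> bup x y = B)"
  then obtain y where x: "x \<in> XX" and y: "y \<in> XX" and e1: "bdn y x = A" and e2: "bup x y = B" by blast
  have ly: "lp E z0 (MU y)" by (rule MU_lp[OF y])
  have e1': "A = RR y (MU' x)" using e1 down_eq by simp
  have e2': "B = LL x (MU y)" using e2 up_eq by simp
  have hA: "homotopic_paths E (MU A) (MU y)" unfolding e1' by (rule MU_R[OF y MU'_lp[OF x]])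
  have "LL B (reversepath (MU A)) = LL x (MU y +++ reversepath (MU A))"
    unfolding e2' by (rule L_comp[OF x ly lp_rev[OF lA]])
  also have "\<dots> = LL x (MU y +++ reversepath (MU y))"
    by (rule L_hom[OF x lp_join[OF ly lp_rev[OF lA]]], rule hp_join[OF hp_refl[OF ly] hp_rev[OF hA] ly lp_rev[OF lA]])
  also have "\<dots> = LL x (linepath z0 z0)"
    by (rule L_hom[OF x lp_join[OF ly lp_rev[OF ly]] hp_rinv[OF ly]])
  also have "\<dots> = x" by (rule L_id[OF x])
  finally show "x = LL B (reversepath (MU A))" by simp
qed

lemma bar_down_eq:
  assumes A: "A \<in> XX" and B: "B \<in> XX"
  shows "bar_down XX bup bdn A B = RR A (reversepath (MU' B))"
  unfolding bar_down_def
proof (rule the_equality)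
  have lA: "lp E z0 (MU A)" using MU_lp[OF A] .
  have lB: "lp E z1 (MU' B)" using MU'_lp[OF B] .
  show "RR A (reversepath (MU' B)) \<in> XX \<and> (\<exists>x\<in>XX. bdn (RR A (reversepath (MU' B))) x = A \<and> bup x (RR A (reversepath (MU' B))) = B)"
    using L_in[OF B lp_rev[OF lA]] R_in[OF A lp_rev[OF lB]] S_inv[OF A B] by blast
  fix y assume "y \<in> XX \<and> (\<exists>x\<in>XX. bdn y x = A \<and> bup x y = B)"
  then obtain x where y: "y \<in> XX" and x: "x \<in> XX" and e1: "bdn y x = A" and e2: "bup x y = B" by blast
  have lx: "lp E z1 (MU' x)" by (rule MU'_lp[OF x])
  have e1': "A = RR y (MU' x)" using e1 down_eq by simp
  have e2': "B = LL x (MU y)" using e2 up_eq by simp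
  have hB: "homotopic_paths E (MU' B) (MU' x)" unfolding e2' by (rule MU'_L[OF x MU_lp[OF y]])
  have "RR A (reversepath (MU' B)) = RR y (MU' x +++ reversepath (MU' B))"
    unfolding e1' by (rule R_comp[OF y lx lp_rev[OF lB]])
  also have "\<dots> = RR y (MU' x +++ reversepath (MU' x))"
    by (rule R_hom[OF y lp_join[OF lx lp_rev[OF lB]]], rule hp_join[OF hp_refl[OF lx] hp_rev[OF hB] lx lp_rev[OF lB]])
  also have "\<dots> = RR y (linepath z1 z1)"
    by (rule R_hom[OF y lp_join[OF lx lp_rev[OF lx]] hp_rinv[OF lx]])
  also have "\<dots> = y" by (rule R_id[OF y])
  finally show "y = RR A (reversepath (MU' B))" by simp
qed

end


declare linepath_refl[simp del]

definition winv :: "('a \<times> bool) list \<Rightarrow> ('a \<times> bool) list" where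
  "winv u = rev (map (\<lambda>(c,e). (c, \<not> e)) u)"

lemma winv_Nil[simp]: "winv [] = []" by (simp add: winv_def)
lemma winv_Cons[simp]: "winv ((c,e)#u) = winv u @ [(c, \<not> e)]" by (simp add: winv_def)
lemma winv_set: "set (map fst (winv u)) = set (map fst u)"
  by (induction u) (auto simp: winv_def)

context tl3 begin

definition sg :: "bpair set \<Rightarrow> bool \<Rightarrow> real \<Rightarrow> real^4" where
  "sg c e = (if e then MU c else reversepath (MU c))"
definition sg' :: "bpair set \<Rightarrow> bool \<Rightarrow> real \<Rightarrow> real^4" where
  "sg' c e = (if e then MU' c else reversepath (MU' c))"

definition Wp :: "(bpair set \<times> bool) list \<Rightarrow> real \<Rightarrow> real^4" where
  "Wp w = foldr (\<lambda>(c,e) p. sg c e +++ p) w (linepath z0 z0)"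
definition Wq :: "(bpair set \<times> bool) list \<Rightarrow> real \<Rightarrow> real^4" where
  "Wq w = foldr (\<lambda>(c,e) p. sg' c e +++ p) w (linepath z1 z1)"

lemma Wp_Nil[simp]: "Wp [] = linepath z0 z0" by (simp add: Wp_def)
lemma Wp_Cons[simp]: "Wp ((c,e)#w) = sg c e +++ Wp w" by (simp add: Wp_def)
lemma Wq_Nil[simp]: "Wq [] = linepath z1 z1" by (simp add: Wq_def)
lemma Wq_Cons[simp]: "Wq ((c,e)#w) = sg' c e +++ Wq w" by (simp add: Wq_def)

lemma sg_lp: "c \<in> XX \<Longrightarrow> lp E z0 (sg c e)"
  unfolding sg_def using MU_lp lp_rev by auto
lemma sg'_lp: "c \<in> XX \<Longrightarrow> lp E z1 (sg' c e)"
  unfolding sg'_def using MU'_lp lp_rev by auto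

lemma Wp_lp: "set (map fst w) \<subseteq> XX \<Longrightarrow> lp E z0 (Wp w)"
proof (induction w)
  case Nil then show ?case using lp_const[OF z0E] by (simp only: Wp_Nil)
next
  case (Cons x w) then show ?case by (cases x) (auto intro!: lp_join sg_lp)
qed
lemma Wq_lp: "set (map fst w) \<subseteq> XX \<Longrightarrow> lp E z1 (Wq w)"
proof (induction w)
  case Nil then show ?case using lp_const[OF z1E] by (simp only: Wq_Nil)
next
  case (Cons x w) then show ?case by (cases x) (auto intro!: lp_join sg'_lp)
qed

lemma word_L: "C \<in> XX \<Longrightarrow> set (map fst w) \<subseteq> XX \<Longrightarrow> word_act bup (bar_up XX bup bdn) C w = LL C (Wp w)"
proof (induction w arbitrary: C)
  case Nil then show ?case by (simp only: Wp_Nil L_id[OF Nil.prems(1)] word_act_def foldl_Nil)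
next
  case (Cons x w)
  obtain c e where x: "x = (c,e)" by fastforce
  have c: "c \<in> XX" and w: "set (map fst w) \<subseteq> XX" using Cons.prems x by auto
  have st: "(if e then bup C c else bar_up XX bup bdn C c) = LL C (sg c e)"
    using up_eq bar_up_eq[OF Cons.prems(1) c] by (simp add: sg_def)
  have "word_act bup (bar_up XX bup bdn) C (x#w) = word_act bup (bar_up XX bup bdn) (if e then bup C c else bar_up XX bup bdn C c) w"
    by (simp add: word_act_def x)
  also have "\<dots> = LL (LL C (sg c e)) (Wp w)" unfolding st
    by (rule Cons.IH[OF L_in[OF Cons.prems(1) sg_lp[OF c]] w])
  also have "\<dots> = LL C (sg c e +++ Wp w)" by (rule L_comp[OF Cons.prems(1) sg_lp[OF c] Wp_lp[OF w]])
  finally show ?case by (simp add: x)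
qed

lemma word_R: "C \<in> XX \<Longrightarrow> set (map fst w) \<subseteq> XX \<Longrightarrow> word_act bdn (bar_down XX bup bdn) C w = RR C (Wq w)"
proof (induction w arbitrary: C)
  case Nil then show ?case by (simp only: Wq_Nil R_id[OF Nil.prems(1)] word_act_def foldl_Nil)
next
  case (Cons x w)
  obtain c e where x: "x = (c,e)" by fastforce
  have c: "c \<in> XX" and w: "set (map fst w) \<subseteq> XX" using Cons.prems x by auto
  have st: "(if e then bdn C c else bar_down XX bup bdn C c) = RR C (sg' c e)"
    using down_eq bar_down_eq[OF Cons.prems(1) c] by (simp add: sg'_def)
  have "word_act bdn (bar_down XX bup bdn) C (x#w) = word_act bdn (bar_down XX bup bdn) (if e then bdn C c else bar_down XX bup bdn C c) w"
    by (simp add: word_act_def x)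
  also have "\<dots> = RR (RR C (sg' c e)) (Wq w)" unfolding st
    by (rule Cons.IH[OF R_in[OF Cons.prems(1) sg'_lp[OF c]] w])
  also have "\<dots> = RR C (sg' c e +++ Wq w)" by (rule R_comp[OF Cons.prems(1) sg'_lp[OF c] Wq_lp[OF w]])
  finally show ?case by (simp add: x)
qed

lemma Wp_app: "set (map fst u) \<subseteq> XX \<Longrightarrow> set (map fst v) \<subseteq> XX \<Longrightarrow> homotopic_paths E (Wp (u @ v)) (Wp u +++ Wp v)"
proof (induction u)
  case Nil then show ?case using hp_sym[OF hp_lid[OF Wp_lp[OF Nil.prems(2)]]] by (simp only: Wp_Nil append_Nil)
next
  case (Cons x u)
  obtain c e where x: "x = (c,e)" by fastforce
  have c: "c \<in> XX" and u: "set (map fst u) \<subseteq> XX" using Cons.prems x by auto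
  have "homotopic_paths E (sg c e +++ Wp (u @ v)) (sg c e +++ (Wp u +++ Wp v))"
    by (rule hp_join[OF hp_refl[OF sg_lp[OF c]] Cons.IH[OF u Cons.prems(2)] sg_lp[OF c]])
       (rule Wp_lp, use Cons.prems u in auto)
  also have "homotopic_paths E \<dots> ((sg c e +++ Wp u) +++ Wp v)"
    by (rule hp_assoc[OF sg_lp[OF c] Wp_lp[OF u] Wp_lp[OF Cons.prems(2)]])
  finally show ?case by (simp add: x)
qed

lemma Wq_app: "set (map fst u) \<subseteq> XX \<Longrightarrow> set (map fst v) \<subseteq> XX \<Longrightarrow> homotopic_paths E (Wq (u @ v)) (Wq u +++ Wq v)"
proof (induction u)
  case Nil then show ?case using hp_sym[OF hp_lid[OF Wq_lp[OF Nil.prems(2)]]] by (simp only: Wq_Nil append_Nil)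
next
  case (Cons x u)
  obtain c e where x: "x = (c,e)" by fastforce
  have c: "c \<in> XX" and u: "set (map fst u) \<subseteq> XX" using Cons.prems x by auto
  have "homotopic_paths E (sg' c e +++ Wq (u @ v)) (sg' c e +++ (Wq u +++ Wq v))"
    by (rule hp_join[OF hp_refl[OF sg'_lp[OF c]] Cons.IH[OF u Cons.prems(2)] sg'_lp[OF c]])
       (rule Wq_lp, use Cons.prems u in auto)
  also have "homotopic_paths E \<dots> ((sg' c e +++ Wq u) +++ Wq v)"
    by (rule hp_assoc[OF sg'_lp[OF c] Wq_lp[OF u] Wq_lp[OF Cons.prems(2)]])
  finally show ?case by (simp add: x)
qed

lemma Wp_inv: "set (map fst u) \<subseteq> XX \<Longrightarrow> homotopic_paths E (Wp (winv u)) (reversepath (Wp u))"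
proof (induction u)
  case Nil then show ?case using hp_refl[OF lp_const[OF z0E]] by (simp only: winv_Nil Wp_Nil reversepath_linepath)
next
  case (Cons x u)
  obtain c e where x: "x = (c,e)" by fastforce
  have c: "c \<in> XX" and u: "set (map fst u) \<subseteq> XX" using Cons.prems x by auto
  have u': "set (map fst (winv u)) \<subseteq> XX" using u winv_set by metis
  have c': "set (map fst [(c, \<not> e)]) \<subseteq> XX" using c by simp
  have "homotopic_paths E (Wp (winv u @ [(c, \<not> e)])) (Wp (winv u) +++ Wp [(c, \<not> e)])"
    by (rule Wp_app[OF u' c'])
  also have "homotopic_paths E \<dots> (reversepath (Wp u) +++ sg c (\<not> e))"
    unfolding Wp_Cons Wp_Nil
    by (rule hp_join[OF Cons.IH[OF u] hp_rid[OF sg_lp[OF c]] Wp_lp[OF u'] lp_join[OF sg_lp[OF c] lp_const[OF z0E]]])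
  also have "reversepath (Wp u) +++ sg c (\<not> e) = reversepath (sg c e +++ Wp u)"
  proof -
    have "pathfinish (sg c e) = pathstart (Wp u)" using sg_lp[OF c] Wp_lp[OF u] by (simp add: lp_def)
    then show ?thesis by (simp add: reversepath_joinpaths sg_def)
  qed
  finally show ?case by (simp add: x)
qed

lemma Wq_inv: "set (map fst u) \<subseteq> XX \<Longrightarrow> homotopic_paths E (Wq (winv u)) (reversepath (Wq u))"
proof (induction u)
  case Nil then show ?case using hp_refl[OF lp_const[OF z1E]] by (simp only: winv_Nil Wq_Nil reversepath_linepath)
next
  case (Cons x u)
  obtain c e where x: "x = (c,e)" by fastforce
  have c: "c \<in> XX" and u: "set (map fst u) \<subseteq> XX" using Cons.prems x by auto
  have u': "set (map fst (winv u)) \<subseteq> XX" using u winv_set by metis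
  have c': "set (map fst [(c, \<not> e)]) \<subseteq> XX" using c by simp
  have "homotopic_paths E (Wq (winv u @ [(c, \<not> e)])) (Wq (winv u) +++ Wq [(c, \<not> e)])"
    by (rule Wq_app[OF u' c'])
  also have "homotopic_paths E \<dots> (reversepath (Wq u) +++ sg' c (\<not> e))"
    unfolding Wq_Cons Wq_Nil
    by (rule hp_join[OF Cons.IH[OF u] hp_rid[OF sg'_lp[OF c]] Wq_lp[OF u'] lp_join[OF sg'_lp[OF c] lp_const[OF z1E]]])
  also have "reversepath (Wq u) +++ sg' c (\<not> e) = reversepath (sg' c e +++ Wq u)"
  proof -
    have "pathfinish (sg' c e) = pathstart (Wq u)" using sg'_lp[OF c] Wq_lp[OF u] by (simp add: lp_def)
    then show ?thesis by (simp add: reversepath_joinpaths sg'_def)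
  qed
  finally show ?case by (simp add: x)
qed

end


declare linepath_refl[simp del]

context tl3 begin

lemma conjL:
  assumes a: "a \<in> XX" and b: "b \<in> XX" and w1: "set (map fst w1) \<subseteq> XX" and u1: "set (map fst u1) \<subseteq> XX"
    and w2: "set (map fst w2) \<subseteq> XX"
    and l: "lp E z0 l" and hl: "homotopic_paths E l (reversepath (Wp u1) +++ (sg b e +++ Wp u1))"
  shows "LL (RR (LL a (Wp w1)) (Wq w2)) l = RR (LL a (Wp (w1 @ winv u1 @ [(b,e)] @ u1))) (Wq w2)"
proof -
  have x1: "LL a (Wp w1) \<in> XX" by (rule L_in[OF a Wp_lp[OF w1]])
  have e0: "LL (RR (LL a (Wp w1)) (Wq w2)) l = RR (LL (LL a (Wp w1)) l) (Wq w2)"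
    by (rule LR_comm[OF x1 l Wq_lp[OF w2]])
  have e1: "LL (LL a (Wp w1)) l = LL a (Wp w1 +++ l)" by (rule L_comp[OF a Wp_lp[OF w1] l])
  have s1: "set (map fst (winv u1)) \<subseteq> XX" using u1 winv_set by metis
  have s2: "set (map fst ([(b,e)] @ u1)) \<subseteq> XX" using u1 b by simp
  have s3: "set (map fst (winv u1 @ [(b,e)] @ u1)) \<subseteq> XX" using s1 s2 by simp
  have lU: "lp E z0 (Wp u1)" by (rule Wp_lp[OF u1])
  have lS: "lp E z0 (sg b e)" by (rule sg_lp[OF b])
  have lW: "lp E z0 (Wp w1)" by (rule Wp_lp[OF w1])
  have lM: "lp E z0 (reversepath (Wp u1) +++ (sg b e +++ Wp u1))"
    by (intro lp_join lp_rev lU lS)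
  have h4: "Wp ([(b,e)] @ u1) = sg b e +++ Wp u1" by simp
  have h3: "homotopic_paths E (Wp (winv u1 @ [(b,e)] @ u1)) (reversepath (Wp u1) +++ (sg b e +++ Wp u1))"
  proof -
    have "homotopic_paths E (Wp (winv u1 @ [(b,e)] @ u1)) (Wp (winv u1) +++ Wp ([(b,e)] @ u1))"
      by (rule Wp_app[OF s1 s2])
    also have "homotopic_paths E \<dots> (reversepath (Wp u1) +++ (sg b e +++ Wp u1))"
      unfolding h4 by (rule hp_join[OF Wp_inv[OF u1] hp_refl[OF lp_join[OF lS lU]] Wp_lp[OF s1] lp_join[OF lS lU]])
    finally show ?thesis .
  qed
  have h2: "homotopic_paths E (Wp (w1 @ winv u1 @ [(b,e)] @ u1)) (Wp w1 +++ (reversepath (Wp u1) +++ (sg b e +++ Wp u1)))"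
  proof -
    have "homotopic_paths E (Wp (w1 @ winv u1 @ [(b,e)] @ u1)) (Wp w1 +++ Wp (winv u1 @ [(b,e)] @ u1))"
      by (rule Wp_app[OF w1 s3])
    also have "homotopic_paths E \<dots> (Wp w1 +++ (reversepath (Wp u1) +++ (sg b e +++ Wp u1)))"
      by (rule hp_join[OF hp_refl[OF lW] h3 lW Wp_lp[OF s3]])
    finally show ?thesis .
  qed
  have h1: "homotopic_paths E (Wp w1 +++ l) (Wp w1 +++ (reversepath (Wp u1) +++ (sg b e +++ Wp u1)))"
    by (rule hp_join[OF hp_refl[OF lW] hl lW l])
  have e2: "LL a (Wp w1 +++ l) = LL a (Wp (w1 @ winv u1 @ [(b,e)] @ u1))"
    by (rule L_hom[OF a lp_join[OF lW l] hp_trans[OF h1 hp_sym[OF h2]]])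
  show ?thesis using e0 e1 e2 by simp
qed

lemma conjR:
  assumes a: "x \<in> XX" and b: "b \<in> XX" and w2: "set (map fst w2) \<subseteq> XX" and u2: "set (map fst u2) \<subseteq> XX"
    and l: "lp E z1 l" and hl: "homotopic_paths E l (reversepath (Wq u2) +++ (sg' b e +++ Wq u2))"
  shows "RR (RR x (Wq w2)) l = RR x (Wq (w2 @ winv u2 @ [(b,e)] @ u2))"
proof -
  have e1: "RR (RR x (Wq w2)) l = RR x (Wq w2 +++ l)" by (rule R_comp[OF a Wq_lp[OF w2] l])
  have s1: "set (map fst (winv u2)) \<subseteq> XX" using u2 winv_set by metis
  have s2: "set (map fst ([(b,e)] @ u2)) \<subseteq> XX" using u2 b by simp
  have s3: "set (map fst (winv u2 @ [(b,e)] @ u2)) \<subseteq> XX" using s1 s2 by simp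
  have lU: "lp E z1 (Wq u2)" by (rule Wq_lp[OF u2])
  have lS: "lp E z1 (sg' b e)" by (rule sg'_lp[OF b])
  have lW: "lp E z1 (Wq w2)" by (rule Wq_lp[OF w2])
  have h4: "Wq ([(b,e)] @ u2) = sg' b e +++ Wq u2" by simp
  have h3: "homotopic_paths E (Wq (winv u2 @ [(b,e)] @ u2)) (reversepath (Wq u2) +++ (sg' b e +++ Wq u2))"
  proof -
    have "homotopic_paths E (Wq (winv u2 @ [(b,e)] @ u2)) (Wq (winv u2) +++ Wq ([(b,e)] @ u2))"
      by (rule Wq_app[OF s1 s2])
    also have "homotopic_paths E \<dots> (reversepath (Wq u2) +++ (sg' b e +++ Wq u2))"
      unfolding h4 by (rule hp_join[OF Wq_inv[OF u2] hp_refl[OF lp_join[OF lS lU]] Wq_lp[OF s1] lp_join[OF lS lU]])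
    finally show ?thesis .
  qed
  have h2: "homotopic_paths E (Wq (w2 @ winv u2 @ [(b,e)] @ u2)) (Wq w2 +++ (reversepath (Wq u2) +++ (sg' b e +++ Wq u2)))"
  proof -
    have "homotopic_paths E (Wq (w2 @ winv u2 @ [(b,e)] @ u2)) (Wq w2 +++ Wq (winv u2 @ [(b,e)] @ u2))"
      by (rule Wq_app[OF w2 s3])
    also have "homotopic_paths E \<dots> (Wq w2 +++ (reversepath (Wq u2) +++ (sg' b e +++ Wq u2)))"
      by (rule hp_join[OF hp_refl[OF lW] h3 lW Wq_lp[OF s3]])
    finally show ?thesis .
  qed
  have h1: "homotopic_paths E (Wq w2 +++ l) (Wq w2 +++ (reversepath (Wq u2) +++ (sg' b e +++ Wq u2)))"
    by (rule hp_join[OF hp_refl[OF lW] hl lW l])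
  have e2: "RR x (Wq w2 +++ l) = RR x (Wq (w2 @ winv u2 @ [(b,e)] @ u2))"
    by (rule R_hom[OF a lp_join[OF lW l] hp_trans[OF h1 hp_sym[OF h2]]])
  show ?thesis using e1 e2 by simp
qed

definition TT :: "bpair set set \<Rightarrow> bpair set set" where
  "TT A = {x. \<exists>a\<in>A. \<exists>w1 w2. set (map fst w1) \<subseteq> A \<and> set (map fst w2) \<subseteq> A \<and> x = RR (LL a (Wp w1)) (Wq w2)}"

lemma TT_sub: assumes "A \<subseteq> XX" shows "TT A \<subseteq> XX"
proof
  fix x assume "x \<in> TT A"
  then obtain a w1 w2 where "a \<in> A" "set (map fst w1) \<subseteq> A" "set (map fst w2) \<subseteq> A" "x = RR (LL a (Wp w1)) (Wq w2)"
    unfolding TT_def by blast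
  then show "x \<in> XX" using assms
    by (simp only:) (rule R_in[OF L_in[OF _ Wp_lp] Wq_lp], auto)
qed

lemma TT_base: assumes "A \<subseteq> XX" "a \<in> A" shows "a \<in> TT A"
proof -
  have "a = RR (LL a (Wp [])) (Wq [])"
    using assms L_id R_id L_in lp_const z0E by (simp only: Wp_Nil Wq_Nil) auto
  then show ?thesis unfolding TT_def using assms(2) by (intro CollectI bexI[of _ a] exI[of _ "[]"]) auto
qed

lemma TT_elim:
  assumes "A \<subseteq> XX" "x \<in> TT A"
  obtains a w1 w2 where "a \<in> A" "set (map fst w1) \<subseteq> A" "set (map fst w2) \<subseteq> A" "x = RR (LL a (Wp w1)) (Wq w2)"
    "a \<in> XX" "set (map fst w1) \<subseteq> XX" "set (map fst w2) \<subseteq> XX"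
  using assms unfolding TT_def by blast

lemma rev_conj: assumes "pathstart p = pathstart q" "pathfinish q = pathstart r"
  shows "reversepath (reversepath p +++ (q +++ r)) = (reversepath r +++ reversepath q) +++ p"
proof -
  have "reversepath (reversepath p +++ (q +++ r)) = reversepath (q +++ r) +++ reversepath (reversepath p)"
    by (rule reversepath_joinpaths) (simp add: assms)
  also have "reversepath (q +++ r) = reversepath r +++ reversepath q"
    by (rule reversepath_joinpaths) (simp add: assms)
  finally show ?thesis by simp
qed

lemma TT_closed:
  assumes A: "A \<subseteq> XX" and x: "x \<in> TT A" and y: "y \<in> TT A"
  shows "bup x y \<in> TT A" "bdn x y \<in> TT A" "bar_up XX bup bdn x y \<in> TT A" "bar_down XX bup bdn x y \<in> TT A"
proof -
  obtain a w1 w2 where xa: "a \<in> A" "set (map fst w1) \<subseteq> A" "set (map fst w2) \<subseteq> A" "x = RR (LL a (Wp w1)) (Wq w2)"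
    "a \<in> XX" "set (map fst w1) \<subseteq> XX" "set (map fst w2) \<subseteq> XX" using TT_elim[OF A x] by blast
  obtain b u1 u2 where yb: "b \<in> A" "set (map fst u1) \<subseteq> A" "set (map fst u2) \<subseteq> A" "y = RR (LL b (Wp u1)) (Wq u2)"
    "b \<in> XX" "set (map fst u1) \<subseteq> XX" "set (map fst u2) \<subseteq> XX" using TT_elim[OF A y] by blast
  have xX: "x \<in> XX" and yX: "y \<in> XX" using TT_sub[OF A] x y by auto
  have lU1: "lp E z0 (Wp u1)" by (rule Wp_lp[OF yb(6)])
  have lU2: "lp E z1 (Wq u2)" by (rule Wq_lp[OF yb(7)])
  have bU: "LL b (Wp u1) \<in> XX" by (rule L_in[OF yb(5) lU1])
  have lMb: "lp E z0 (MU b)" by (rule MU_lp[OF yb(5)])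
  have lMb': "lp E z1 (MU' b)" by (rule MU'_lp[OF yb(5)])
  have hMU: "homotopic_paths E (MU y) (reversepath (Wp u1) +++ (MU b +++ Wp u1))"
  proof -
    have "homotopic_paths E (MU y) (MU (LL b (Wp u1)))" unfolding yb(4) by (rule MU_R[OF bU lU2])
    also have "homotopic_paths E \<dots> (reversepath (Wp u1) +++ (MU b +++ Wp u1))" by (rule MU_L[OF yb(5) lU1])
    finally show ?thesis .
  qed
  have hMU': "homotopic_paths E (MU' y) (reversepath (Wq u2) +++ (MU' b +++ Wq u2))"
  proof -
    have "homotopic_paths E (MU' y) (reversepath (Wq u2) +++ (MU' (LL b (Wp u1)) +++ Wq u2))"
      unfolding yb(4) by (rule MU'_R[OF bU lU2])
    also have "homotopic_paths E \<dots> (reversepath (Wq u2) +++ (MU' b +++ Wq u2))"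
      by (rule hp_join[OF hp_refl[OF lp_rev[OF lU2]] hp_join[OF MU'_L[OF yb(5) lU1] hp_refl[OF lU2] MU'_lp[OF bU] lU2]
            lp_rev[OF lU2] lp_join[OF MU'_lp[OF bU] lU2]])
    finally show ?thesis .
  qed
  have sA1: "set (map fst (w1 @ winv u1 @ [(b,e)] @ u1)) \<subseteq> A" for e
    using xa(2) yb(1,2) winv_set[of u1] by auto
  have sA2: "set (map fst (w2 @ winv u2 @ [(b,e)] @ u2)) \<subseteq> A" for e
    using xa(3) yb(1,3) winv_set[of u2] by auto
  have inT1: "RR (LL a (Wp (w1 @ winv u1 @ [(b,e)] @ u1))) (Wq w2) \<in> TT A" for e
    unfolding TT_def using xa(1,3) sA1 by blast
  have inT2: "RR (LL a (Wp w1)) (Wq (w2 @ winv u2 @ [(b,e)] @ u2)) \<in> TT A" for e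
    unfolding TT_def using xa(1,2) sA2 by blast
  have aW1: "LL a (Wp w1) \<in> XX" by (rule L_in[OF xa(5) Wp_lp[OF xa(6)]])
  have "bup x y = LL x (MU y)" by (rule up_eq)
  also have "\<dots> = RR (LL a (Wp (w1 @ winv u1 @ [(b,True)] @ u1))) (Wq w2)"
    unfolding xa(4) by (rule conjL[OF xa(5) yb(5) xa(6) yb(6) xa(7) MU_lp[OF yX]]) (use hMU in \<open>simp add: sg_def\<close>)
  finally show "bup x y \<in> TT A" using inT1 by simp
  have "bar_up XX bup bdn x y = LL x (reversepath (MU y))" by (rule bar_up_eq[OF xX yX])
  also have "\<dots> = RR (LL a (Wp (w1 @ winv u1 @ [(b,False)] @ u1))) (Wq w2)"
    unfolding xa(4)
  proof (rule conjL[OF xa(5) yb(5) xa(6) yb(6) xa(7) lp_rev[OF MU_lp[OF yX]]])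
    have "homotopic_paths E (reversepath (MU y)) (reversepath (reversepath (Wp u1) +++ (MU b +++ Wp u1)))"
      by (rule hp_rev[OF hMU])
    also have "reversepath (reversepath (Wp u1) +++ (MU b +++ Wp u1)) = (reversepath (Wp u1) +++ reversepath (MU b)) +++ Wp u1"
      by (rule rev_conj) (use lU1 lMb in \<open>simp_all add: lp_def\<close>)
    also have "homotopic_paths E \<dots> (reversepath (Wp u1) +++ (reversepath (MU b) +++ Wp u1))"
      by (rule hp_sym[OF hp_assoc[OF lp_rev[OF lU1] lp_rev[OF lMb] lU1]])
    finally show "homotopic_paths E (reversepath (MU y)) (reversepath (Wp u1) +++ (sg b False +++ Wp u1))"
      by (simp add: sg_def)
  qed
  finally show "bar_up XX bup bdn x y \<in> TT A" using inT1 by simp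
  have "bdn x y = RR x (MU' y)" by (rule down_eq)
  also have "\<dots> = RR (LL a (Wp w1)) (Wq (w2 @ winv u2 @ [(b,True)] @ u2))"
    unfolding xa(4) by (rule conjR[OF aW1 yb(5) xa(7) yb(7) MU'_lp[OF yX]]) (use hMU' in \<open>simp add: sg'_def\<close>)
  finally show "bdn x y \<in> TT A" using inT2 by simp
  have "bar_down XX bup bdn x y = RR x (reversepath (MU' y))" by (rule bar_down_eq[OF xX yX])
  also have "\<dots> = RR (LL a (Wp w1)) (Wq (w2 @ winv u2 @ [(b,False)] @ u2))"
    unfolding xa(4)
  proof (rule conjR[OF aW1 yb(5) xa(7) yb(7) lp_rev[OF MU'_lp[OF yX]]])
    have "homotopic_paths E (reversepath (MU' y)) (reversepath (reversepath (Wq u2) +++ (MU' b +++ Wq u2)))"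
      by (rule hp_rev[OF hMU'])
    also have "reversepath (reversepath (Wq u2) +++ (MU' b +++ Wq u2)) = (reversepath (Wq u2) +++ reversepath (MU' b)) +++ Wq u2"
      by (rule rev_conj) (use lU2 lMb' in \<open>simp_all add: lp_def\<close>)
    also have "homotopic_paths E \<dots> (reversepath (Wq u2) +++ (reversepath (MU' b) +++ Wq u2))"
      by (rule hp_sym[OF hp_assoc[OF lp_rev[OF lU2] lp_rev[OF lMb'] lU2]])
    finally show "homotopic_paths E (reversepath (MU' y)) (reversepath (Wq u2) +++ (sg' b False +++ Wq u2))"
      by (simp add: sg'_def)
  qed
  finally show "bar_down XX bup bdn x y \<in> TT A" using inT2 by simp
qed

lemma main_loc:
  assumes gen: "generating_set XX bup bdn A"
  shows "\<forall>x\<in>XX. \<exists>a\<in>A. \<exists>w1 w2.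
           set (map fst w1) \<subseteq> A \<and> set (map fst w2) \<subseteq> A \<and>
           x = word_act bdn (bar_down XX bup bdn) (word_act bup (bar_up XX bup bdn) a w1) w2"
proof
  have A: "A \<subseteq> XX" and g: "generated XX bup bdn A = XX" using gen unfolding generating_set_def by auto
  fix x assume x: "x \<in> XX"
  have "TT A \<in> {C. C \<subseteq> XX \<and> A \<subseteq> C \<and>
      (\<forall>x\<in>C. \<forall>y\<in>C. bup x y \<in> C \<and> bdn x y \<in> C \<and>
                     bar_up XX bup bdn x y \<in> C \<and> bar_down XX bup bdn x y \<in> C)}"
  proof (rule CollectI, intro conjI)
    show "TT A \<subseteq> XX" by (rule TT_sub[OF A])
    show "A \<subseteq> TT A" using TT_base[OF A] by (rule subsetI)
    show "\<forall>x\<in>TT A. \<forall>y\<in>TT A. bup x y \<in> TT A \<and> bdn x y \<in> TT A \<and>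
                     bar_up XX bup bdn x y \<in> TT A \<and> bar_down XX bup bdn x y \<in> TT A"
      by (intro ballI conjI; rule TT_closed[OF A])
  qed
  then have "generated XX bup bdn A \<subseteq> TT A" unfolding generated_def by (rule Inter_lower)
  then have "x \<in> TT A" using g x by blast
  then obtain a w1 w2 where xa: "a \<in> A" "set (map fst w1) \<subseteq> A" "set (map fst w2) \<subseteq> A" "x = RR (LL a (Wp w1)) (Wq w2)"
    "a \<in> XX" "set (map fst w1) \<subseteq> XX" "set (map fst w2) \<subseteq> XX" using TT_elim[OF A] by blast
  have "word_act bdn (bar_down XX bup bdn) (word_act bup (bar_up XX bup bdn) a w1) w2 = x"
    using word_L[OF xa(5,6)] word_R[OF L_in[OF xa(5) Wp_lp[OF xa(6)]] xa(7)] xa(4) by simp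
  then show "\<exists>a\<in>A. \<exists>w1 w2. set (map fst w1) \<subseteq> A \<and> set (map fst w2) \<subseteq> A \<and>
           x = word_act bdn (bar_down XX bup bdn) (word_act bup (bar_up XX bup bdn) a w1) w2"
    using xa(1-3) by metis
qed

end


hide_const (open) UnivPoly.up

theorem mainTheorem9:
  fixes n :: nat
    and phi :: "nat \<Rightarrow> complex \<Rightarrow> complex \<Rightarrow> real^4"
    and h :: "real^3 \<Rightarrow> real^4" and h' :: "real^4 \<Rightarrow> real^3"
    and v :: "real^3" and z0 z1 :: "real^4"
    and A :: "bpair set set"
  defines "X \<equiv> topbiq n phi z0 z1"
      and "up \<equiv> bq_up n phi z0 z1"
      and "down \<equiv> bq_down n phi z0 z1"
  assumes tub: "tubular n phi"
    and ball: "homeomorphism (cball 0 1) (h ` cball 0 1) h h'"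
    and ballS3: "h ` cball 0 1 \<subseteq> S3"
    and nbhd_in: "nbhd n phi \<subseteq> h ` ball 0 1"
    and v: "norm v = 1" and z0: "z0 = h v" and z1: "z1 = h (- v)"
    and gen: "generating_set X up down A"
  shows "\<forall>x\<in>X. \<exists>a\<in>A. \<exists>w1 w2.
           set (map fst w1) \<subseteq> A \<and> set (map fst w2) \<subseteq> A \<and>
           x = word_act down (bar_down X up down)
                 (word_act up (bar_up X up down) a w1) w2"
proof -
  interpret T: tl n phi by unfold_locales (rule tub)
  have be: "bdry n phi \<subseteq> ext n phi" by (rule T.bdry_ext[OF ball ballS3 nbhd_in])
  have zE: "h u \<in> ext n phi" if u: "norm u = 1" for u
  proof -
    have uc: "u \<in> cball 0 1" using u by simp
    have "h u \<in> S3" using ballS3 uc by blast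
    moreover have "h u \<notin> nbhd n phi"
    proof
      assume "h u \<in> nbhd n phi"
      then obtain q where q: "q \<in> ball 0 1" "h u = h q" using nbhd_in by blast
      have qc: "q \<in> cball 0 1" using q by simp
      have "u = q" using ball uc qc q(2) unfolding homeomorphism_def by metis
      then show False using q u by simp
    qed
    ultimately have "h u \<in> S3 - nbhd n phi" by blast
    then show ?thesis unfolding ext_def using closure_subset by blast
  qed
  have z0E: "z0 \<in> ext n phi" using zE[OF v] z0 by simp
  have z1E: "z1 \<in> ext n phi" using zE[of "- v"] v z1 by simp
  interpret I: tl3 n phi z0 z1 by unfold_locales (fact tub be z0E z1E)+
  show ?thesis using I.main_loc[OF gen[unfolded X_def up_def down_def]] unfolding X_def up_def down_def .
qed

end
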